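(* Let $p,g_i,S,d,R,\eta_i,\beta,f_\gamma,N,D,p^*$ and $Pol^r_{n',2d'}$ be as in the context. For each positive integer $r$ let $$l_r=\sup\Big\{\gamma\in\mathbb{R} : f_\gamma(z)-\tfrac{1}{r}\big(\textstyle\sum_{i=1}^N z_i^2\big)^D\in Pol^r_{N,2D}\Big\}$$ (with $\sup\emptyset=-\infty$), and let $m_r=\max_{i=1,\dots,r}l_i$. Then $m_r\le p^*$ for all $r$, $\{m_r\}$ is nondecreasing, and $\lim_{r\to\infty}m_r=p^*$.
   Context: Let $p,g_1,\dots,g_m$ be real polynomials in $x=(x_1,\dots,x_n)$ and let $S=\{x\in\mathbb{R}^n : g_i(x)\ge 0,\ i=1,\dots,m\}$. Let $p^*=\inf_{x\in S}p(x)$ (with $p^*=+\infty$ if $S=\emptyset$). Let $d\ge 1$ be the integer such that $2d$ is the smallest even integer larger than or equal to the maximum of the degrees of $p,g_1,\dots,g_m$. Assume there is $R>0$ with $\sum_{i=1}^n x_i^2\le R$ for all $x\in S$. Let $\eta_1,\dots,\eta_m$ be real numbers with $g_i(x)\le\eta_i$ for all $x\in S$, and let $\beta$ be a real number with $-p(x)\le\beta$ for all $x\in S$. For a polynomial $q$ in $x$ of degree at most $2d$, $y^{2d}q(x/y)$ denotes its homogenization to a form of degree $2d$ in $(x,y)$. For $\gamma\in\mathbb{R}$ define the form in the variables $z=(x,s,y)=(x_1,\dots,x_n,s_0,\dots,s_{m+1},y)$: $$f_\gamma(x,s,y)=\big(\gamma y^{2d}-y^{2d}p(x/y)-s_0^2y^{2d-2}\big)^2+\sum_{i=1}^m\big(y^{2d}g_i(x/y)-s_i^2y^{2d-2}\big)^2+\Big(\big(R+\textstyle\sum_{i=1}^m\eta_i+\beta+\gamma\big)^d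 y^{2d}-\big(\sum_{i=1}^n x_i^2+\sum_{i=0}^m s_i^2\big)^d-s_{m+1}^{2d}\Big)^2.$$ Set $N=n+m+3$ and $D=2d$, so $f_\gamma$ is a form of degree $2D$ in $N$ variables. For a form $q$ in $n'$ variables and $v,w\in\mathbb{R}^{n'}$, $q(v^2-w^2)$ denotes $q(v_1^2-w_1^2,\dots,v_{n'}^2-w_{n'}^2)$. For integers $n',d',r\ge1$ define $Pol^r_{n',2d'}$ as the set of forms $q$ of degree $2d'$ in $n'$ variables such that the polynomial $$\Big(q(v^2-w^2)+\tfrac{1}{2r}\Big(\sum_{i=1}^{n'}(v_i^4+w_i^4)\Big)^{d'}\Big)\cdot\Big(\sum_{i=1}^{n'}v_i^2+\sum_{i=1}^{n'}w_i^2\Big)^{r^2}$$ in the variables $(v,w)\in\mathbb{R}^{2n'}$ has all coefficients nonnegative. *)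

theory Defs
  imports "HOL-Analysis.Analysis" "HOL-Library.Poly_Mapping"
begin

text \<open>Real multivariate polynomials in countably many variables indexed by nat:
  a monomial is a finitely supported exponent vector, a polynomial maps monomials
  to their coefficients.\<close>

type_synonym mpoly = "(nat \<Rightarrow>\<^sub>0 nat) \<Rightarrow>\<^sub>0 real"

definition mp_const :: "real \<Rightarrow> mpoly" where
  "mp_const c = Poly_Mapping.single 0 c"

definition mp_var :: "nat \<Rightarrow> mpoly" where
  "mp_var i = Poly_Mapping.single (Poly_Mapping.single i 1) 1"

definition mp_coeff :: "mpoly \<Rightarrow> (nat \<Rightarrow>\<^sub>0 nat) \<Rightarrow> real" where
  "mp_coeff q a = Poly_Mapping.lookup q a"

definition mon_deg :: "(nat \<Rightarrow>\<^sub>0 nat) \<Rightarrow> nat" where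
  "mon_deg a = (\<Sum>i\<in>Poly_Mapping.keys a. Poly_Mapping.lookup a i)"

definition mp_deg :: "mpoly \<Rightarrow> nat" where
  "mp_deg q = Max (insert 0 (mon_deg ` Poly_Mapping.keys q))"

definition mp_vars :: "mpoly \<Rightarrow> nat set" where
  "mp_vars q = (\<Union>a\<in>Poly_Mapping.keys q. Poly_Mapping.keys a)"

definition mp_homogeneous :: "nat \<Rightarrow> mpoly \<Rightarrow> bool" where
  "mp_homogeneous k q \<longleftrightarrow> (\<forall>a\<in>Poly_Mapping.keys q. mon_deg a = k)"

definition mp_eval :: "(nat \<Rightarrow> real) \<Rightarrow> mpoly \<Rightarrow> real" where
  "mp_eval x q = (\<Sum>a\<in>Poly_Mapping.keys q.
       Poly_Mapping.lookup q a * (\<Prod>i\<in>Poly_Mapping.keys a. x i ^ Poly_Mapping.lookup a i))"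

definition mp_subst :: "(nat \<Rightarrow> mpoly) \<Rightarrow> mpoly \<Rightarrow> mpoly" where
  "mp_subst \<sigma> q = (\<Sum>a\<in>Poly_Mapping.keys q.
       mp_const (Poly_Mapping.lookup q a) * (\<Prod>i\<in>Poly_Mapping.keys a. \<sigma> i ^ Poly_Mapping.lookup a i))"

text \<open>homogenization y^k q(x/y) of q (deg q \<le> k) to a form of degree k, using the
  variable with index y as homogenizing variable:
  each monomial x^a becomes x^a y^(k - |a|).\<close>
definition mp_homogenize :: "nat \<Rightarrow> nat \<Rightarrow> mpoly \<Rightarrow> mpoly" where
  "mp_homogenize k y q = (\<Sum>a\<in>Poly_Mapping.keys q.
       Poly_Mapping.single (a + Poly_Mapping.single y (k - mon_deg a)) (Poly_Mapping.lookup q a))"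

text \<open>The form f_gamma. Variable layout of z = (x,s,y):
  x_i (i = 1..n) has index i-1, s_j (j = 0..m+1) has index n+j, y has index n+m+2.
  The g_i are indexed by i = 1..m, as are the eta_i.\<close>
definition f_gamma ::
  "nat \<Rightarrow> nat \<Rightarrow> nat \<Rightarrow> mpoly \<Rightarrow> (nat \<Rightarrow> mpoly) \<Rightarrow> real \<Rightarrow> (nat \<Rightarrow> real) \<Rightarrow> real \<Rightarrow> real \<Rightarrow> mpoly" where
  "f_gamma n m d p g R \<eta> \<beta> \<gamma> =
     (let Y = mp_var (n + m + 2); S = (\<lambda>j. mp_var (n + j)); X = (\<lambda>i. mp_var i);
          H = mp_homogenize (2*d) (n + m + 2)
      in (mp_const \<gamma> * Y ^ (2*d) - H p - S 0 ^ 2 * Y ^ (2*d - 2)) ^ 2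
         + (\<Sum>i=1..m. (H (g i) - S i ^ 2 * Y ^ (2*d - 2)) ^ 2)
         + (mp_const ((R + (\<Sum>i=1..m. \<eta> i) + \<beta> + \<gamma>) ^ d) * Y ^ (2*d)
             - ((\<Sum>i<n. X i ^ 2) + (\<Sum>j=0..m. S j ^ 2)) ^ d - S (m + 1) ^ (2*d)) ^ 2)"

text \<open>Pol^r_{n',2d'}: variables v_i (i=1..n') have index i-1, w_i have index n'+i-1.\<close>
definition Pol :: "nat \<Rightarrow> nat \<Rightarrow> nat \<Rightarrow> mpoly set" where
  "Pol r n' d' = {q. mp_homogeneous (2*d') q \<and> mp_vars q \<subseteq> {..<n'} \<and>
     (let V = (\<lambda>i. mp_var i); W = (\<lambda>i. mp_var (n' + i));
          P = (mp_subst (\<lambda>i. V i ^ 2 - W i ^ 2) q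
                + mp_const (1 / (2 * real r)) * (\<Sum>i<n'. V i ^ 4 + W i ^ 4) ^ d')
              * (\<Sum>i<n'. V i ^ 2 + W i ^ 2) ^ (r ^ 2)
      in \<forall>a. mp_coeff P a \<ge> 0)}"

end

theory Submission
  imports Defs
begin

definition monv :: "(nat \<Rightarrow> 'b::comm_ring_1) \<Rightarrow> (nat \<Rightarrow>\<^sub>0 nat) \<Rightarrow> 'b" where
  "monv \<sigma> a = (\<Prod>i\<in>Poly_Mapping.keys a. \<sigma> i ^ Poly_Mapping.lookup a i)"

definition ext :: "(real \<Rightarrow> 'b::comm_ring_1) \<Rightarrow> (nat \<Rightarrow> 'b) \<Rightarrow> mpoly \<Rightarrow> 'b" where
  "ext \<kappa> \<sigma> q = (\<Sum>a\<in>Poly_Mapping.keys q. \<kappa> (Poly_Mapping.lookup q a) * monv \<sigma> a)"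

lemma monv_superset:
  assumes "finite A" "Poly_Mapping.keys a \<subseteq> A"
  shows "monv \<sigma> a = (\<Prod>i\<in>A. \<sigma> i ^ Poly_Mapping.lookup a i)"
  unfolding monv_def
  by (rule prod.mono_neutral_left) (use assms in \<open>auto simp: in_keys_iff\<close>)

lemma monv_zero [simp]: "monv \<sigma> 0 = 1"
  by (simp add: monv_def)

lemma monv_add: "monv \<sigma> (a + b) = monv \<sigma> a * monv \<sigma> b"
proof -
  let ?A = "Poly_Mapping.keys a \<union> Poly_Mapping.keys b"
  have f: "finite ?A" by simp
  have 1: "monv \<sigma> (a + b) = (\<Prod>i\<in>?A. \<sigma> i ^ Poly_Mapping.lookup (a+b) i)"
    by (rule monv_superset[OF f keys_add])
  have 2: "monv \<sigma> a = (\<Prod>i\<in>?A. \<sigma> i ^ Poly_Mapping.lookup a i)"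
    by (rule monv_superset[OF f]) blast
  have 3: "monv \<sigma> b = (\<Prod>i\<in>?A. \<sigma> i ^ Poly_Mapping.lookup b i)"
    by (rule monv_superset[OF f]) blast
  show ?thesis unfolding 1 2 3 lookup_add power_add prod.distrib ..
qed

lemma monv_single: "monv \<sigma> (Poly_Mapping.single i k) = \<sigma> i ^ k"
  by (simp add: monv_def)

lemma ext_superset:
  assumes "finite A" "Poly_Mapping.keys q \<subseteq> A" "\<kappa> 0 = 0"
  shows "ext \<kappa> \<sigma> q = (\<Sum>a\<in>A. \<kappa> (Poly_Mapping.lookup q a) * monv \<sigma> a)"
  unfolding ext_def
  by (rule sum.mono_neutral_left) (use assms in \<open>auto simp: in_keys_iff\<close>)

lemma ext_zero [simp]: "ext \<kappa> \<sigma> 0 = 0"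
  by (simp add: ext_def)

lemma ext_add:
  assumes "\<And>x y. \<kappa> (x + y) = \<kappa> x + \<kappa> y" "\<kappa> 0 = 0"
  shows "ext \<kappa> \<sigma> (p + q) = ext \<kappa> \<sigma> p + ext \<kappa> \<sigma> q"
proof -
  let ?A = "Poly_Mapping.keys p \<union> Poly_Mapping.keys q"
  have f: "finite ?A" by simp
  have 1: "ext \<kappa> \<sigma> (p + q) = (\<Sum>a\<in>?A. \<kappa> (Poly_Mapping.lookup (p+q) a) * monv \<sigma> a)"
    by (rule ext_superset[where \<kappa>=\<kappa>, OF f keys_add assms(2)])
  have 2: "ext \<kappa> \<sigma> p = (\<Sum>a\<in>?A. \<kappa> (Poly_Mapping.lookup p a) * monv \<sigma> a)"
    by (rule ext_superset[where \<kappa>=\<kappa>, OF f _ assms(2)]) blast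
  have 3: "ext \<kappa> \<sigma> q = (\<Sum>a\<in>?A. \<kappa> (Poly_Mapping.lookup q a) * monv \<sigma> a)"
    by (rule ext_superset[where \<kappa>=\<kappa>, OF f _ assms(2)]) blast
  show ?thesis unfolding 1 2 3 lookup_add assms(1) distrib_right sum.distrib ..
qed

lemma ext_single:
  assumes "\<kappa> 0 = 0"
  shows "ext \<kappa> \<sigma> (Poly_Mapping.single a c) = \<kappa> c * monv \<sigma> a"
  using assms by (simp add: ext_def)

lemma ext_sum:
  assumes "\<And>x y. \<kappa> (x + y) = \<kappa> x + \<kappa> y" "\<kappa> 0 = 0"
  shows "ext \<kappa> \<sigma> (\<Sum>i\<in>I. f i) = (\<Sum>i\<in>I. ext \<kappa> \<sigma> (f i))"
  by (induction I rule: infinite_finite_induct) (simp_all add: ext_add[OF assms])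

lemma poly_expand: "p = (\<Sum>a\<in>Poly_Mapping.keys p. Poly_Mapping.single a (Poly_Mapping.lookup p a))"
proof (rule poly_mapping_eqI)
  fix k
  show "Poly_Mapping.lookup p k = Poly_Mapping.lookup (\<Sum>a\<in>Poly_Mapping.keys p. Poly_Mapping.single a (Poly_Mapping.lookup p a)) k"
    by (simp add: lookup_sum lookup_single when_def in_keys_iff sum.delta' eq_commute[of _ k] cong: if_cong)
qed

locale rhom =
  fixes \<kappa> :: "real \<Rightarrow> 'b::comm_ring_1"
  assumes add: "\<And>x y. \<kappa> (x + y) = \<kappa> x + \<kappa> y" and zero: "\<kappa> 0 = 0"
    and mult: "\<And>x y. \<kappa> (x * y) = \<kappa> x * \<kappa> y" and one: "\<kappa> 1 = 1"
begin

lemma e_add: "ext \<kappa> \<sigma> (p + q) = ext \<kappa> \<sigma> p + ext \<kappa> \<sigma> q"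
  by (rule ext_add[where \<kappa>=\<kappa>, OF add zero])

lemma e_sum: "ext \<kappa> \<sigma> (\<Sum>i\<in>I. f i) = (\<Sum>i\<in>I. ext \<kappa> \<sigma> (f i))"
  by (rule ext_sum[where \<kappa>=\<kappa>, OF add zero])

lemma e_single: "ext \<kappa> \<sigma> (Poly_Mapping.single a c) = \<kappa> c * monv \<sigma> a"
  by (rule ext_single[where \<kappa>=\<kappa>, OF zero])

lemma e_mult: "ext \<kappa> \<sigma> (p * q) = ext \<kappa> \<sigma> p * ext \<kappa> \<sigma> q"
proof -
  let ?P = "Poly_Mapping.keys p" and ?Q = "Poly_Mapping.keys q"
  have "p * q = (\<Sum>a\<in>?P. Poly_Mapping.single a (Poly_Mapping.lookup p a)) * (\<Sum>b\<in>?Q. Poly_Mapping.single b (Poly_Mapping.lookup q b))"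
    by (subst (1) poly_expand[of p], subst (1) poly_expand[of q]) (rule refl)
  also have "\<dots> = (\<Sum>a\<in>?P. \<Sum>b\<in>?Q. Poly_Mapping.single (a + b) (Poly_Mapping.lookup p a * Poly_Mapping.lookup q b))"
    unfolding sum_product mult_single ..
  finally have "ext \<kappa> \<sigma> (p * q) = (\<Sum>a\<in>?P. \<Sum>b\<in>?Q. \<kappa> (Poly_Mapping.lookup p a) * monv \<sigma> a * (\<kappa> (Poly_Mapping.lookup q b) * monv \<sigma> b))"
    by (simp add: e_sum e_single mult monv_add algebra_simps)
  also have "\<dots> = ext \<kappa> \<sigma> p * ext \<kappa> \<sigma> q"
    by (simp add: ext_def sum_product)
  finally show ?thesis .
qed

lemma e_one: "ext \<kappa> \<sigma> 1 = 1"
  using e_single[where a=0 and c=1 and \<sigma>=\<sigma>] by (simp add: one)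

lemma e_uminus: "ext \<kappa> \<sigma> (- p) = - ext \<kappa> \<sigma> p"
  using e_add[where p="-p" and q=p and \<sigma>=\<sigma>] by (simp add: eq_neg_iff_add_eq_0)

lemma e_diff: "ext \<kappa> \<sigma> (p - q) = ext \<kappa> \<sigma> p - ext \<kappa> \<sigma> q"
  using e_add[where p=p and q="-q" and \<sigma>=\<sigma>] by (simp add: e_uminus)

lemma e_power: "ext \<kappa> \<sigma> (p ^ k) = ext \<kappa> \<sigma> p ^ k"
  by (induction k) (simp_all add: e_one e_mult)

lemma e_prod: "ext \<kappa> \<sigma> (\<Prod>i\<in>I. f i) = (\<Prod>i\<in>I. ext \<kappa> \<sigma> (f i))"
  by (induction I rule: infinite_finite_induct) (simp_all add: e_one e_mult)

end

interpretation ev: rhom "\<lambda>c::real. c"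
  by unfold_locales simp_all

lemma mp_const_add: "mp_const (x + y) = mp_const x + mp_const y"
  by (simp add: mp_const_def single_add)
lemma mp_const_mult: "mp_const (x * y) = mp_const x * mp_const y"
  by (simp add: mp_const_def mult_single)

interpretation sb: rhom mp_const
  by unfold_locales (simp_all add: mp_const_add mp_const_mult, simp_all add: mp_const_def)

lemma mp_eval_ext: "mp_eval x q = ext (\<lambda>c. c) x q"
  by (simp add: mp_eval_def ext_def monv_def)

lemma mp_subst_ext: "mp_subst \<sigma> q = ext mp_const \<sigma> q"
  by (simp add: mp_subst_def ext_def monv_def)

lemma mp_eval_add [simp]: "mp_eval x (p + q) = mp_eval x p + mp_eval x q"
  by (simp add: mp_eval_ext ev.e_add)
lemma mp_eval_diff [simp]: "mp_eval x (p - q) = mp_eval x p - mp_eval x q"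
  by (simp add: mp_eval_ext ev.e_diff)
lemma mp_eval_uminus [simp]: "mp_eval x (- p) = - mp_eval x p"
  by (simp add: mp_eval_ext ev.e_uminus)
lemma mp_eval_mult [simp]: "mp_eval x (p * q) = mp_eval x p * mp_eval x q"
  by (simp add: mp_eval_ext ev.e_mult)
lemma mp_eval_power [simp]: "mp_eval x (p ^ k) = mp_eval x p ^ k"
  by (simp add: mp_eval_ext ev.e_power)
lemma mp_eval_sum [simp]: "mp_eval x (\<Sum>i\<in>I. f i) = (\<Sum>i\<in>I. mp_eval x (f i))"
  by (simp add: mp_eval_ext ev.e_sum)
lemma mp_eval_prod [simp]: "mp_eval x (\<Prod>i\<in>I. f i) = (\<Prod>i\<in>I. mp_eval x (f i))"
  by (simp add: mp_eval_ext ev.e_prod)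
lemma mp_eval_one [simp]: "mp_eval x 1 = 1"
  by (simp add: mp_eval_ext ev.e_one)
lemma mp_eval_zero [simp]: "mp_eval x 0 = 0"
  by (simp add: mp_eval_ext)
lemma mp_eval_single: "mp_eval x (Poly_Mapping.single a c) = c * monv x a"
  by (simp add: mp_eval_ext ev.e_single)
lemma mp_eval_const [simp]: "mp_eval x (mp_const c) = c"
  by (simp add: mp_const_def mp_eval_single)
lemma mp_eval_var [simp]: "mp_eval x (mp_var i) = x i"
  by (simp add: mp_var_def mp_eval_single monv_single)

lemma mp_subst_add [simp]: "mp_subst s (p + q) = mp_subst s p + mp_subst s q"
  by (simp add: mp_subst_ext sb.e_add)
lemma mp_subst_diff [simp]: "mp_subst s (p - q) = mp_subst s p - mp_subst s q"
  by (simp add: mp_subst_ext sb.e_diff)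
lemma mp_subst_mult [simp]: "mp_subst s (p * q) = mp_subst s p * mp_subst s q"
  by (simp add: mp_subst_ext sb.e_mult)
lemma mp_subst_power [simp]: "mp_subst s (p ^ k) = mp_subst s p ^ k"
  by (simp add: mp_subst_ext sb.e_power)
lemma mp_subst_sum [simp]: "mp_subst s (\<Sum>i\<in>I. f i) = (\<Sum>i\<in>I. mp_subst s (f i))"
  by (simp add: mp_subst_ext sb.e_sum)
lemma mp_subst_single: "mp_subst s (Poly_Mapping.single a c) = mp_const c * monv s a"
  by (simp add: mp_subst_ext sb.e_single)
lemma mp_subst_const [simp]: "mp_subst s (mp_const c) = mp_const c"
  by (simp add: mp_const_def mp_subst_single)
lemma mp_subst_var [simp]: "mp_subst s (mp_var i) = s i"
  by (simp add: mp_var_def mp_subst_single monv_single mp_const_def)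

lemma monv_eval: "mp_eval x (monv s a) = monv (\<lambda>i. mp_eval x (s i)) a"
  by (simp add: monv_def)

lemma mp_eval_subst: "mp_eval x (mp_subst s q) = mp_eval (\<lambda>i. mp_eval x (s i)) q"
  unfolding mp_subst_ext ext_def mp_eval_sum mp_eval_mult mp_eval_const monv_eval
  by (simp add: mp_eval_ext ext_def)

lemma mon_deg_superset:
  assumes "finite A" "Poly_Mapping.keys a \<subseteq> A"
  shows "mon_deg a = (\<Sum>i\<in>A. Poly_Mapping.lookup a i)"
  unfolding mon_deg_def
  by (rule sum.mono_neutral_left) (use assms in \<open>auto simp: in_keys_iff\<close>)

lemma mon_deg_add: "mon_deg (a + b) = mon_deg a + mon_deg b"
proof -
  let ?A = "Poly_Mapping.keys a \<union> Poly_Mapping.keys b"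
  have f: "finite ?A" by simp
  have 1: "mon_deg (a + b) = (\<Sum>i\<in>?A. Poly_Mapping.lookup (a+b) i)"
    by (rule mon_deg_superset[OF f keys_add])
  have 2: "mon_deg a = (\<Sum>i\<in>?A. Poly_Mapping.lookup a i)"
    by (rule mon_deg_superset[OF f]) blast
  have 3: "mon_deg b = (\<Sum>i\<in>?A. Poly_Mapping.lookup b i)"
    by (rule mon_deg_superset[OF f]) blast
  show ?thesis unfolding 1 2 3 lookup_add sum.distrib ..
qed

lemma mon_deg_zero [simp]: "mon_deg 0 = 0"
  by (simp add: mon_deg_def)

lemma mon_deg_single [simp]: "mon_deg (Poly_Mapping.single i k) = k"
  by (simp add: mon_deg_def)

lemma keys_diff_sub: "Poly_Mapping.keys (p - q) \<subseteq> Poly_Mapping.keys p \<union> Poly_Mapping.keys (q::'a \<Rightarrow>\<^sub>0 'b::ab_group_add)"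
  by (auto simp: in_keys_iff lookup_minus)

lemma keys_uminus_eq: "Poly_Mapping.keys (- p) = Poly_Mapping.keys (p::'a \<Rightarrow>\<^sub>0 'b::ab_group_add)"
  by (auto simp: in_keys_iff)

lemma keys_sum_sub: "Poly_Mapping.keys (\<Sum>i\<in>I. f i) \<subseteq> (\<Union>i\<in>I. Poly_Mapping.keys (f i :: 'a \<Rightarrow>\<^sub>0 'b::comm_monoid_add))"
proof (induction I rule: infinite_finite_induct)
  case (insert x F)
  then show ?case using keys_add[of "f x" "sum f F"] by auto
qed auto

lemma keys_mult_closed:
  assumes "\<forall>a\<in>Poly_Mapping.keys p. P a" "\<forall>b\<in>Poly_Mapping.keys q. Q b"
    "\<And>a b. P a \<Longrightarrow> Q b \<Longrightarrow> R (a + b)"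
  shows "\<forall>c\<in>Poly_Mapping.keys (p * (q::mpoly)). R c"
  using keys_mult[of p q] assms by blast

definition hp :: "nat \<Rightarrow> nat set \<Rightarrow> mpoly \<Rightarrow> bool" where
  "hp k V q \<longleftrightarrow> (\<forall>a\<in>Poly_Mapping.keys q. mon_deg a = k \<and> Poly_Mapping.keys a \<subseteq> V)"

definition evk :: "mpoly \<Rightarrow> bool" where
  "evk q \<longleftrightarrow> (\<forall>a\<in>Poly_Mapping.keys q. \<forall>i. even (Poly_Mapping.lookup a i))"

lemma hp_zero [simp]: "hp k V 0" by (simp add: hp_def)
lemma evk_zero [simp]: "evk 0" by (simp add: evk_def)

lemma hp_add: "hp k V p \<Longrightarrow> hp k V q \<Longrightarrow> hp k V (p + q)"
  using keys_add[of p q] unfolding hp_def by blast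
lemma evk_add: "evk p \<Longrightarrow> evk q \<Longrightarrow> evk (p + q)"
  using keys_add[of p q] unfolding evk_def by blast
lemma hp_diff: "hp k V p \<Longrightarrow> hp k V q \<Longrightarrow> hp k V (p - q)"
  using keys_diff_sub[of p q] unfolding hp_def by blast
lemma evk_diff: "evk p \<Longrightarrow> evk q \<Longrightarrow> evk (p - q)"
  using keys_diff_sub[of p q] unfolding evk_def by blast
lemma hp_uminus: "hp k V p \<Longrightarrow> hp k V (- p)"
  unfolding hp_def keys_uminus_eq by blast
lemma hp_sum: "(\<And>i. i \<in> I \<Longrightarrow> hp k V (f i)) \<Longrightarrow> hp k V (\<Sum>i\<in>I. f i)"
  using keys_sum_sub[of f I] unfolding hp_def by blast
lemma evk_sum: "(\<And>i. i \<in> I \<Longrightarrow> evk (f i)) \<Longrightarrow> evk (\<Sum>i\<in>I. f i)"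
  using keys_sum_sub[of f I] unfolding evk_def by blast

lemma hp_mult: "hp k V p \<Longrightarrow> hp l V q \<Longrightarrow> hp (k + l) V (p * q)"
  unfolding hp_def
  by (rule keys_mult_closed[where P="\<lambda>a. mon_deg a = k \<and> Poly_Mapping.keys a \<subseteq> V"
        and Q="\<lambda>a. mon_deg a = l \<and> Poly_Mapping.keys a \<subseteq> V"])
     (auto simp: mon_deg_add dest: subsetD[OF keys_add])

lemma evk_mult: "evk p \<Longrightarrow> evk q \<Longrightarrow> evk (p * q)"
  unfolding evk_def
  by (rule keys_mult_closed[where P="\<lambda>a. \<forall>i. even (Poly_Mapping.lookup a i)"
        and Q="\<lambda>a. \<forall>i. even (Poly_Mapping.lookup a i)"])
     (auto simp: lookup_add)

lemma hp_one [simp]: "hp 0 V 1" by (simp add: hp_def)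
lemma evk_one [simp]: "evk 1" by (simp add: evk_def)

lemma hp_power: "hp k V p \<Longrightarrow> hp (k * j) V (p ^ j)"
proof (induction j)
  case (Suc j)
  then have "hp (k + k * j) V (p * p ^ j)" by (intro hp_mult) auto
  then show ?case by simp
qed simp

lemma evk_power: "evk p \<Longrightarrow> evk (p ^ j)"
  by (induction j) (auto intro: evk_mult)

lemma hp_prod: "(\<And>i. i \<in> I \<Longrightarrow> hp (k i) V (f i)) \<Longrightarrow> hp (\<Sum>i\<in>I. k i) V (\<Prod>i\<in>I. f i)"
proof (induction I rule: infinite_finite_induct)
  case (insert x F)
  then show ?case by (simp add: hp_mult)
qed auto

lemma evk_prod: "(\<And>i. i \<in> I \<Longrightarrow> evk (f i)) \<Longrightarrow> evk (\<Prod>i\<in>I. f i)"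
proof (induction I rule: infinite_finite_induct)
  case (insert x F)
  then show ?case by (simp add: evk_mult)
qed auto

lemma hp_const [simp]: "hp 0 V (mp_const c)"
  by (simp add: hp_def mp_const_def)
lemma evk_const [simp]: "evk (mp_const c)"
  by (simp add: evk_def mp_const_def)

lemma hp_cmul: "hp k V p \<Longrightarrow> hp k V (mp_const c * p)"
  using hp_mult[of 0 V "mp_const c" k p] by simp
lemma evk_cmul: "evk p \<Longrightarrow> evk (mp_const c * p)"
  by (simp add: evk_mult)

lemma hp_var: "i \<in> V \<Longrightarrow> hp 1 V (mp_var i)"
  by (simp add: hp_def mp_var_def)

lemma evk_var2: "evk (mp_var i ^ 2)"
  by (simp add: evk_def mp_var_def power2_eq_square mult_single lookup_add)

lemma hp_mono: "hp k V p \<Longrightarrow> V \<subseteq> W \<Longrightarrow> hp k W p"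
  unfolding hp_def by blast

lemma hp_homogeneous: "hp k V p \<Longrightarrow> mp_homogeneous k p"
  unfolding hp_def mp_homogeneous_def by blast

lemma hp_vars: "hp k V p \<Longrightarrow> mp_vars p \<subseteq> V"
  unfolding hp_def mp_vars_def by blast

lemma monv_eq_prod: "monv s a = (\<Prod>i\<in>Poly_Mapping.keys a. s i ^ Poly_Mapping.lookup a i)"
  by (simp add: monv_def)

lemma hp_monv:
  assumes "\<And>i. i \<in> Poly_Mapping.keys a \<Longrightarrow> hp l V (s i)"
  shows "hp (l * mon_deg a) V (monv s a)"
proof -
  have "hp (\<Sum>i\<in>Poly_Mapping.keys a. l * Poly_Mapping.lookup a i) V (monv s a)"
    unfolding monv_eq_prod by (rule hp_prod) (use assms hp_power in blast)
  then show ?thesis by (simp add: mon_deg_def sum_distrib_left)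
qed

lemma hp_subst:
  assumes "hp k U q" "\<And>i. i \<in> U \<Longrightarrow> hp l V (s i)"
  shows "hp (l * k) V (mp_subst s q)"
  unfolding mp_subst_def
proof (rule hp_sum)
  fix a assume a: "a \<in> Poly_Mapping.keys q"
  have ka: "Poly_Mapping.keys a \<subseteq> U" using assms(1) a by (simp add: hp_def)
  have "hp (l * mon_deg a) V (monv s a)"
    by (rule hp_monv) (use ka assms(2) in blast)
  moreover have "mon_deg a = k" using assms(1) a by (simp add: hp_def)
  ultimately show "hp (l * k) V (mp_const (Poly_Mapping.lookup q a) *
         (\<Prod>i\<in>Poly_Mapping.keys a. s i ^ Poly_Mapping.lookup a i))"
    by (simp add: hp_cmul monv_eq_prod)
qed

lemma evk_subst:
  assumes "\<And>i. evk (s i)"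
  shows "evk (mp_subst s q)"
  unfolding mp_subst_def
  by (intro evk_sum evk_cmul evk_prod evk_power assms)

lemma hp_homogenize:
  assumes "mp_deg q \<le> k" "mp_vars q \<subseteq> V" "y \<in> V"
  shows "hp k V (mp_homogenize k y q)"
  unfolding mp_homogenize_def
proof (rule hp_sum)
  fix a assume a: "a \<in> Poly_Mapping.keys q"
  have "mon_deg a \<le> mp_deg q" unfolding mp_deg_def using a by (intro Max_ge) auto
  then have d: "mon_deg (a + Poly_Mapping.single y (k - mon_deg a)) = k"
    using assms(1) by (simp add: mon_deg_add)
  have "Poly_Mapping.keys (a + Poly_Mapping.single y (k - mon_deg a)) \<subseteq> V"
    using keys_add[of a "Poly_Mapping.single y (k - mon_deg a)"] assms(2,3) a
    by (auto simp: mp_vars_def split: if_splits)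
  with d show "hp k V (Poly_Mapping.single (a + Poly_Mapping.single y (k - mon_deg a)) (Poly_Mapping.lookup q a))"
    by (simp add: hp_def)
qed

lemma mp_eval_vars:
  assumes "mp_vars q \<subseteq> V" "\<And>i. i \<in> V \<Longrightarrow> x i = y i"
  shows "mp_eval x q = mp_eval y q"
  unfolding mp_eval_def
  by (rule sum.cong[OF refl], rule arg_cong[where f="\<lambda>t. _ * t"], rule prod.cong[OF refl])
     (use assms in \<open>auto simp: mp_vars_def\<close>)

lemma monv_scale: "monv (\<lambda>i. c * x i) a = c ^ mon_deg a * monv x a"
  by (simp add: monv_def mon_deg_def power_mult_distrib prod.distrib power_sum)

lemma mp_eval_scale:
  assumes "hp k V q"
  shows "mp_eval (\<lambda>i. c * x i) q = c ^ k * mp_eval x q"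
proof -
  have "mp_eval (\<lambda>i. c * x i) q = (\<Sum>a\<in>Poly_Mapping.keys q. Poly_Mapping.lookup q a * (c ^ k * monv x a))"
    unfolding mp_eval_ext ext_def monv_scale
    by (rule sum.cong) (use assms in \<open>auto simp: hp_def\<close>)
  also have "\<dots> = c ^ k * mp_eval x q"
    by (simp add: mp_eval_ext ext_def sum_distrib_left algebra_simps)
  finally show ?thesis .
qed

lemma mp_eval_nonneg:
  assumes "\<And>a. Poly_Mapping.lookup q a \<ge> 0" "\<And>i. x i \<ge> 0"
  shows "mp_eval x q \<ge> 0"
  unfolding mp_eval_def using assms by (intro sum_nonneg mult_nonneg_nonneg prod_nonneg) auto

lemma add_eq_iff_minus:
  fixes a b c :: "nat \<Rightarrow>\<^sub>0 nat"
  assumes "\<forall>i. Poly_Mapping.lookup b i \<le> Poly_Mapping.lookup c i"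
  shows "b + a = c \<longleftrightarrow> a = c - b"
proof
  assume "b + a = c" then show "a = c - b"
    by (intro poly_mapping_eqI) (auto simp: lookup_add lookup_minus)
next
  assume "a = c - b" then show "b + a = c"
    using assms by (intro poly_mapping_eqI) (auto simp: lookup_add lookup_minus)
qed

lemma lookup_single_mult:
  "Poly_Mapping.lookup (Poly_Mapping.single b c * (H::mpoly)) a =
     (if (\<forall>i. Poly_Mapping.lookup b i \<le> Poly_Mapping.lookup a i) then c * Poly_Mapping.lookup H (a - b) else 0)"
proof -
  have "Poly_Mapping.single b c * H = (\<Sum>e\<in>Poly_Mapping.keys H. Poly_Mapping.single (b + e) (c * Poly_Mapping.lookup H e))"
    by (subst (1) poly_expand[of H]) (simp add: sum_distrib_left mult_single)
  then have eq: "Poly_Mapping.lookup (Poly_Mapping.single b c * H) a =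
      (\<Sum>e\<in>Poly_Mapping.keys H. if b + e = a then c * Poly_Mapping.lookup H e else 0)"
    by (simp add: lookup_sum lookup_single when_def)
  show ?thesis
  proof (cases "\<forall>i. Poly_Mapping.lookup b i \<le> Poly_Mapping.lookup a i")
    case True
    then have "(\<Sum>e\<in>Poly_Mapping.keys H. if b + e = a then c * Poly_Mapping.lookup H e else 0)
        = (\<Sum>e\<in>Poly_Mapping.keys H. if e = a - b then c * Poly_Mapping.lookup H e else 0)"
      by (intro sum.cong refl) (simp add: add_eq_iff_minus)
    also have "\<dots> = c * Poly_Mapping.lookup H (a - b)"
      by (simp add: sum.delta' in_keys_iff)
    finally show ?thesis using eq True by simp
  next
    case False
    then have "\<And>e. b + e \<noteq> a"
      by (metis le_add1 lookup_add)
    then have "Poly_Mapping.lookup (Poly_Mapping.single b c * H) a = 0" using eq by simp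
    then show ?thesis using False by auto
  qed
qed

definition Tsq :: "nat \<Rightarrow> mpoly" where "Tsq M = (\<Sum>j<M. mp_var j ^ 2)"

lemma var_sq: "mp_var j ^ 2 = Poly_Mapping.single (Poly_Mapping.single j 2) 1"
  by (simp add: mp_var_def power2_eq_square mult_single numeral_2_eq_2 flip: single_add)

lemma lookup_Tsq_mult:
  "Poly_Mapping.lookup (Tsq M * H) a =
     (\<Sum>j<M. if 2 \<le> Poly_Mapping.lookup a j then Poly_Mapping.lookup H (a - Poly_Mapping.single j 2) else 0)"
proof -
  have "Tsq M * H = (\<Sum>j<M. Poly_Mapping.single (Poly_Mapping.single j 2) 1 * H)"
    by (simp add: Tsq_def var_sq sum_distrib_right)
  moreover have "\<And>j. (\<forall>i. Poly_Mapping.lookup (Poly_Mapping.single j (2::nat)) i \<le> Poly_Mapping.lookup a i)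
        \<longleftrightarrow> 2 \<le> Poly_Mapping.lookup a j"
    by (auto simp: lookup_single when_def)
  ultimately show ?thesis
    by (simp add: lookup_sum lookup_single_mult cong: if_cong)
qed

definition ffr :: "nat \<Rightarrow> nat \<Rightarrow> real" where
  "ffr m b = (\<Prod>j<b. real m - real j)"

lemma ffr_0 [simp]: "ffr m 0 = 1" by (simp add: ffr_def)
lemma ffr_Suc: "ffr m (Suc b) = ffr m b * (real m - real b)"
  by (simp add: ffr_def)

lemma ffr_zero_if: "m < b \<Longrightarrow> ffr m b = 0"
  unfolding ffr_def by (rule prod_zero[of "{..<b}"]) (auto intro!: bexI[of _ m])

lemma ffr_rec: "real (Suc m) * ffr m b = ffr (Suc m) b * (real (Suc m) - real b)"
proof (induction b)
  case (Suc b)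
  have "real (Suc m) * ffr m (Suc b) = (real (Suc m) * ffr m b) * (real m - real b)"
    by (simp add: ffr_Suc)
  also have "\<dots> = ffr (Suc m) b * (real (Suc m) - real b) * (real m - real b)"
    using Suc by simp
  also have "\<dots> = ffr (Suc m) (Suc b) * (real (Suc m) - real (Suc b))"
    by (simp add: ffr_Suc algebra_simps)
  finally show ?case .
qed simp

lemma ffr_fact: "ffr m m = fact m"
proof (induction m)
  case (Suc m)
  have "real (Suc m) * ffr m m = ffr (Suc m) m * (real (Suc m) - real m)"
    by (rule ffr_rec)
  then have "ffr (Suc m) m = real (Suc m) * fact m" using Suc by simp
  then show ?case by (simp add: ffr_Suc)
qed simp


lemma minus_single_decomp:
  fixes a :: "nat \<Rightarrow>\<^sub>0 nat"
  assumes "2 \<le> Poly_Mapping.lookup a j"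
  shows "a = (a - Poly_Mapping.single j 2) + Poly_Mapping.single j 2"
  using assms by (intro poly_mapping_eqI) (auto simp: lookup_add lookup_minus lookup_single when_def)

lemma lookup_minus_single:
  "Poly_Mapping.lookup (a - Poly_Mapping.single j 2) i = Poly_Mapping.lookup a i - (if i = j then 2 else (0::nat))"
  by (simp add: lookup_minus lookup_single when_def)

lemma prod_diff_le:
  fixes a b :: "'i \<Rightarrow> real"
  assumes "finite I" "\<And>i. i \<in> I \<Longrightarrow> \<bar>a i\<bar> \<le> 1 \<and> \<bar>b i\<bar> \<le> 1"
  shows "\<bar>(\<Prod>i\<in>I. a i) - (\<Prod>i\<in>I. b i)\<bar> \<le> (\<Sum>i\<in>I. \<bar>a i - b i\<bar>)"
  using assms
proof (induction I rule: finite_induct)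
  case (insert y F)
  let ?A = "\<Prod>i\<in>F. a i" and ?B = "\<Prod>i\<in>F. b i"
  have ay: "\<bar>a y\<bar> \<le> 1" and by': "\<bar>b y\<bar> \<le> 1" using insert.prems by auto
  have IH: "\<bar>?A - ?B\<bar> \<le> (\<Sum>i\<in>F. \<bar>a i - b i\<bar>)" using insert by auto
  have Bb: "\<bar>?B\<bar> \<le> 1" unfolding abs_prod by (rule prod_le_1) (use insert.prems in auto)
  have "\<bar>a y * ?A - b y * ?B\<bar> = \<bar>a y * (?A - ?B) + (a y - b y) * ?B\<bar>"
    by (simp add: algebra_simps)
  also have "\<dots> \<le> \<bar>a y\<bar> * \<bar>?A - ?B\<bar> + \<bar>a y - b y\<bar> * \<bar>?B\<bar>"
    by (metis abs_mult abs_triangle_ineq)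
  also have "\<dots> \<le> 1 * \<bar>?A - ?B\<bar> + \<bar>a y - b y\<bar> * 1"
    by (intro add_mono mult_mono) (use ay Bb in auto)
  also have "\<dots> \<le> (\<Sum>i\<in>F. \<bar>a i - b i\<bar>) + \<bar>a y - b y\<bar>" using IH by simp
  finally show ?case using insert.hyps by simp
qed simp

locale polyaG =
  fixes G :: mpoly and M k :: nat
  assumes keysG: "\<And>b. b \<in> Poly_Mapping.keys G \<Longrightarrow>
     mon_deg b = 2*k \<and> Poly_Mapping.keys b \<subseteq> {..<M} \<and> (\<forall>i. even (Poly_Mapping.lookup b i))"
begin

definition okN :: "nat \<Rightarrow> (nat \<Rightarrow>\<^sub>0 nat) \<Rightarrow> bool" where
  "okN N a \<longleftrightarrow> (\<forall>i. even (Poly_Mapping.lookup a i)) \<and> Poly_Mapping.keys a \<subseteq> {..<M} \<and> mon_deg a = 2*(N+k)"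

definition hf :: "(nat \<Rightarrow>\<^sub>0 nat) \<Rightarrow> nat \<Rightarrow> nat" where
  "hf a i = Poly_Mapping.lookup a i div 2"

definition Sf :: "(nat \<Rightarrow>\<^sub>0 nat) \<Rightarrow> real" where
  "Sf a = (\<Sum>b\<in>Poly_Mapping.keys G. Poly_Mapping.lookup G b * (\<Prod>i<M. ffr (hf a i) (hf b i)))"

definition Q :: "nat \<Rightarrow> (nat \<Rightarrow>\<^sub>0 nat) \<Rightarrow> real" where
  "Q N a = (if okN N a then fact N / (\<Prod>i<M. fact (hf a i)) * Sf a else 0)"

lemma sum_hf:
  assumes "Poly_Mapping.keys a \<subseteq> {..<M}" "\<forall>i. even (Poly_Mapping.lookup a i)"
  shows "mon_deg a = 2 * (\<Sum>i<M. hf a i)"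
proof -
  have "mon_deg a = (\<Sum>i<M. Poly_Mapping.lookup a i)"
    by (rule mon_deg_superset) (use assms in auto)
  also have "\<dots> = (\<Sum>i<M. 2 * hf a i)"
    using assms(2) by (intro sum.cong refl) (simp add: hf_def)
  finally show ?thesis by (simp add: sum_distrib_left)
qed

lemma sum_hf_ok: "okN N a \<Longrightarrow> (\<Sum>i<M. hf a i) = N + k"
  using sum_hf[of a] unfolding okN_def by auto

lemma sum_hf_G: "b \<in> Poly_Mapping.keys G \<Longrightarrow> (\<Sum>i<M. hf b i) = k"
  using sum_hf[of b] keysG[of b] by auto

lemma okN_G: "b \<in> Poly_Mapping.keys G \<Longrightarrow> okN 0 b"
  using keysG[of b] by (simp add: okN_def)

lemma prod_fact_pos: "(\<Prod>i<M. fact (f i) :: real) > 0"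
  by (rule prod_pos) simp

lemma base: "Poly_Mapping.lookup G a = Q 0 a"
proof (cases "okN 0 a")
  case True
  have sa: "(\<Sum>i<M. hf a i) = k" using sum_hf_ok[OF True] by simp
  have zero: "(\<Prod>i<M. ffr (hf a i) (hf b i)) = 0" if b: "b \<in> Poly_Mapping.keys G" "b \<noteq> a" for b
  proof -
    have "\<exists>i. Poly_Mapping.lookup b i \<noteq> Poly_Mapping.lookup a i"
    proof (rule ccontr)
      assume "\<not> (\<exists>i. Poly_Mapping.lookup b i \<noteq> Poly_Mapping.lookup a i)"
      then have "b = a" by (intro poly_mapping_eqI) auto
      with b(2) show False by simp
    qed
    then obtain i where i: "Poly_Mapping.lookup b i \<noteq> Poly_Mapping.lookup a i"
      by blast
    have iM: "i < M"
    proof (rule ccontr)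
      assume "\<not> i < M"
      then have "i \<notin> Poly_Mapping.keys b" "i \<notin> Poly_Mapping.keys a"
        using keysG[OF b(1)] True by (auto simp: okN_def)
      then show False using i by (simp add: in_keys_iff)
    qed
    have eb: "even (Poly_Mapping.lookup b i)" using keysG[OF b(1)] by blast
    have ea: "even (Poly_Mapping.lookup a i)" using True by (simp add: okN_def)
    have hne: "hf b i \<noteq> hf a i"
    proof
      assume "hf b i = hf a i"
      then have "2 * hf b i = 2 * hf a i" by simp
      then show False using eb ea i unfolding hf_def by simp
    qed
    have "\<exists>j<M. hf a j < hf b j"
    proof (rule ccontr)
      assume "\<not> (\<exists>j<M. hf a j < hf b j)"
      then have le: "\<forall>j\<in>{..<M}. hf b j \<le> hf a j" by auto
      have "hf b i \<le> hf a i" using le iM by simp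
      then have "hf b i < hf a i" using hne by simp
      then have "\<exists>j\<in>{..<M}. hf b j < hf a j" using iM by blast
      then have "(\<Sum>j<M. hf b j) < (\<Sum>j<M. hf a j)"
        using le by (intro sum_strict_mono_ex1) auto
      then show False using sa sum_hf_G[OF b(1)] by simp
    qed
    then obtain j where j: "j < M" "hf a j < hf b j" by blast
    have "ffr (hf a j) (hf b j) = 0" by (rule ffr_zero_if[OF j(2)])
    then show ?thesis
      using j(1) by (intro prod_zero) auto
  qed
  have "Sf a = (\<Sum>b\<in>Poly_Mapping.keys G. if b = a then Poly_Mapping.lookup G b * (\<Prod>i<M. ffr (hf a i) (hf b i)) else 0)"
    unfolding Sf_def by (intro sum.cong refl) (auto simp: zero)
  also have "\<dots> = Poly_Mapping.lookup G a * (\<Prod>i<M. fact (hf a i))"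
    by (simp add: sum.delta' in_keys_iff ffr_fact)
  finally show ?thesis
    using True prod_fact_pos[of "hf a"] by (simp add: Q_def)
next
  case False
  then have "a \<notin> Poly_Mapping.keys G" using okN_G by blast
  then show ?thesis using False by (simp add: Q_def in_keys_iff)
qed


lemma okN_minus:
  assumes ok: "okN (Suc N) a" and j: "j < M" "2 \<le> Poly_Mapping.lookup a j"
  shows "okN N (a - Poly_Mapping.single j 2)"
proof -
  let ?a = "a - Poly_Mapping.single j 2"
  have dec: "a = ?a + Poly_Mapping.single j 2" by (rule minus_single_decomp[OF j(2)])
  have "mon_deg a = mon_deg ?a + 2" by (subst dec) (simp add: mon_deg_add)
  moreover have "\<forall>i. even (Poly_Mapping.lookup ?a i)"
    using ok by (auto simp: okN_def lookup_minus_single)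
  moreover have "Poly_Mapping.keys ?a \<subseteq> {..<M}"
  proof -
    have "Poly_Mapping.keys ?a \<subseteq> Poly_Mapping.keys a"
      by (auto simp: in_keys_iff lookup_minus_single)
    then show ?thesis using ok by (auto simp: okN_def)
  qed
  ultimately show ?thesis using ok by (simp add: okN_def)
qed

lemma not_okN_minus:
  assumes nok: "\<not> okN (Suc N) a" and j: "j < M" "2 \<le> Poly_Mapping.lookup a j"
  shows "\<not> okN N (a - Poly_Mapping.single j 2)"
proof
  let ?a = "a - Poly_Mapping.single j 2"
  assume ok: "okN N ?a"
  have dec: "a = ?a + Poly_Mapping.single j 2" by (rule minus_single_decomp[OF j(2)])
  have lk: "Poly_Mapping.lookup a i = Poly_Mapping.lookup ?a i + (if i = j then 2 else 0)" for i
    by (subst dec) (simp add: lookup_add lookup_single when_def)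
  have "mon_deg a = mon_deg ?a + 2" by (subst dec) (simp add: mon_deg_add)
  moreover have "\<forall>i. even (Poly_Mapping.lookup a i)"
    using ok by (auto simp: okN_def lk)
  moreover have "Poly_Mapping.keys a \<subseteq> {..<M}"
  proof -
    have "Poly_Mapping.keys a \<subseteq> Poly_Mapping.keys ?a \<union> {j}"
      by (auto simp: in_keys_iff lk split: if_splits)
    then show ?thesis using ok j(1) by (auto simp: okN_def)
  qed
  ultimately have "okN (Suc N) a" using ok by (simp add: okN_def)
  with nok show False by simp
qed

lemma hf_minus: "hf (a - Poly_Mapping.single j 2) i = (if i = j then hf a j - 1 else hf a i)"
  by (auto simp: hf_def lookup_minus_single; presburger)

lemma prod_upd:
  fixes f :: "nat \<Rightarrow> real"
  assumes "j < M"
  shows "(\<Prod>i<M. f (if i = j then x else g i)) * f (g j) = (\<Prod>i<M. f (g i)) * f x"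
proof -
  have fin: "finite {..<M}" and jm: "j \<in> {..<M}" using assms by auto
  have 1: "(\<Prod>i<M. f (if i = j then x else g i)) = f (if j = j then x else g j) * (\<Prod>i\<in>{..<M}-{j}. f (if i = j then x else g i))"
    by (rule prod.remove[OF fin jm])
  have 2: "(\<Prod>i<M. f (g i)) = f (g j) * (\<Prod>i\<in>{..<M}-{j}. f (g i))"
    by (rule prod.remove[OF fin jm])
  have 3: "(\<Prod>i\<in>{..<M}-{j}. f (if i = j then x else g i)) = (\<Prod>i\<in>{..<M}-{j}. f (g i))"
    by (rule prod.cong) auto
  show ?thesis unfolding 1 2 3 by simp
qed

lemma step:
  assumes IH: "\<And>c. Poly_Mapping.lookup H c = Q N c"
  shows "Poly_Mapping.lookup (Tsq M * H) a = Q (Suc N) a"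
proof -
  have L: "Poly_Mapping.lookup (Tsq M * H) a =
      (\<Sum>j<M. if 2 \<le> Poly_Mapping.lookup a j then Q N (a - Poly_Mapping.single j 2) else 0)"
    unfolding lookup_Tsq_mult IH ..
  show ?thesis
  proof (cases "okN (Suc N) a")
    case False
    have "(\<Sum>j<M. if 2 \<le> Poly_Mapping.lookup a j then Q N (a - Poly_Mapping.single j 2) else 0) = 0"
      by (intro sum.neutral) (use not_okN_minus[OF False] in \<open>auto simp: Q_def\<close>)
    then show ?thesis using L False by (simp add: Q_def)
  next
    case True
    define \<mu> where "\<mu> = hf a"
    define D where "D = (\<Prod>i<M. fact (\<mu> i) :: real)"
    have Dpos: "D > 0" unfolding D_def by (rule prod_fact_pos)
    define T where "T j b = Poly_Mapping.lookup G b * (\<Prod>i<M. ffr (\<mu> i) (hf b i)) * (real (\<mu> j) - real (hf b j))" for j b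
    have perj: "(if 2 \<le> Poly_Mapping.lookup a j then Q N (a - Poly_Mapping.single j 2) else 0)
        = fact N / D * (\<Sum>b\<in>Poly_Mapping.keys G. T j b)" if jM: "j < M" for j
    proof (cases "2 \<le> Poly_Mapping.lookup a j")
      case c2: True
      let ?a = "a - Poly_Mapping.single j 2"
      have ok: "okN N ?a" by (rule okN_minus[OF True jM c2])
      obtain m where m: "\<mu> j = Suc m" using c2 unfolding \<mu>_def hf_def
        by (metis Suc_pred div_greater_zero_iff zero_less_numeral)
      have hfa: "hf ?a = (\<lambda>i. if i = j then m else \<mu> i)"
        using m by (auto simp: hf_minus \<mu>_def)
      have f1: "(\<Prod>i<M. fact (hf ?a i) :: real) * real (Suc m) = D"
      proof -
        have "(\<Prod>i<M. fact (hf ?a i) :: real) * fact (\<mu> j) = D * fact m"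
          unfolding hfa D_def by (rule prod_upd[OF jM])
        then have "(\<Prod>i<M. fact (hf ?a i) :: real) * (real (Suc m) * fact m) = D * fact m"
          using m by (simp only: fact_Suc of_nat_mult)
        then have "((\<Prod>i<M. fact (hf ?a i) :: real) * real (Suc m)) * fact m = D * fact m"
          by (simp only: mult.assoc)
        then show ?thesis by simp
      qed
      have fin: "finite {..<M}" and jm: "j \<in> {..<M}" using jM by auto
      have f2: "(\<Prod>i<M. ffr (hf ?a i) (hf b i)) * real (Suc m) =
          (\<Prod>i<M. ffr (\<mu> i) (hf b i)) * (real (\<mu> j) - real (hf b j))" for b
      proof -
        define R where "R = (\<Prod>i\<in>{..<M}-{j}. ffr (\<mu> i) (hf b i))"
        have A0: "(\<Prod>i<M. ffr (hf ?a i) (hf b i)) = ffr (hf ?a j) (hf b j) * (\<Prod>i\<in>{..<M}-{j}. ffr (hf ?a i) (hf b i))"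
          by (rule prod.remove[OF fin jm])
        have A1: "(\<Prod>i\<in>{..<M}-{j}. ffr (hf ?a i) (hf b i)) = R"
          unfolding R_def by (rule prod.cong) (auto simp: hfa)
        have A: "(\<Prod>i<M. ffr (hf ?a i) (hf b i)) = ffr m (hf b j) * R"
          using A0 A1 by (simp add: hfa)
        have B: "(\<Prod>i<M. ffr (\<mu> i) (hf b i)) = ffr (\<mu> j) (hf b j) * R"
          unfolding R_def by (rule prod.remove[OF fin jm])
        have r: "real (Suc m) * ffr m (hf b j) = ffr (Suc m) (hf b j) * (real (Suc m) - real (hf b j))"
          by (rule ffr_rec)
        have "ffr m (hf b j) * R * real (Suc m) = R * (real (Suc m) * ffr m (hf b j))"
          by (simp only: mult_ac)
        also have "\<dots> = R * (ffr (Suc m) (hf b j) * (real (Suc m) - real (hf b j)))"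
          by (simp only: r)
        also have "\<dots> = ffr (Suc m) (hf b j) * R * (real (Suc m) - real (hf b j))"
          by (simp only: mult_ac)
        finally show ?thesis unfolding A B m .
      qed
      have e1: "(\<Prod>i<M. fact (hf ?a i) :: real) = D / real (Suc m)"
        using f1 by (simp add: field_simps)
      have e2: "Sf ?a = (\<Sum>b\<in>Poly_Mapping.keys G. T j b) / real (Suc m)"
        unfolding Sf_def sum_divide_distrib
      proof (rule sum.cong[OF refl])
        fix b
        have "(\<Prod>i<M. ffr (hf ?a i) (hf b i)) = (\<Prod>i<M. ffr (\<mu> i) (hf b i)) * (real (\<mu> j) - real (hf b j)) / real (Suc m)"
          using f2[of b] by (simp add: field_simps)
        then show "Poly_Mapping.lookup G b * (\<Prod>i<M. ffr (hf ?a i) (hf b i)) = T j b / real (Suc m)"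
          by (simp add: T_def)
      qed
      have "Q N ?a = fact N / (\<Prod>i<M. fact (hf ?a i)) * Sf ?a" using ok by (simp add: Q_def)
      also have "\<dots> = fact N / D * (\<Sum>b\<in>Poly_Mapping.keys G. T j b)"
        unfolding e1 e2 using Dpos by (simp add: divide_simps)
      finally show ?thesis using c2 by simp
    next
      case c2: False
      have "even (Poly_Mapping.lookup a j)" using True by (simp add: okN_def)
      with c2 have "Poly_Mapping.lookup a j = 0" by presburger
      then have mu0: "\<mu> j = 0" by (simp add: \<mu>_def hf_def)
      have "T j b = 0" for b
      proof (cases "hf b j = 0")
        case True then show ?thesis by (simp add: T_def mu0)
      next
        case False
        then have "ffr (\<mu> j) (hf b j) = 0" using mu0 by (intro ffr_zero_if) simp
        then have "(\<Prod>i<M. ffr (\<mu> i) (hf b i)) = 0" using jM by (intro prod_zero) auto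
        then show ?thesis by (simp add: T_def)
      qed
      then show ?thesis using c2 by simp
    qed
    have sm: "(\<Sum>j<M. real (\<mu> j) - real (hf b j)) = real (Suc N)" if b: "b \<in> Poly_Mapping.keys G" for b
    proof -
      have "(\<Sum>j<M. real (\<mu> j) - real (hf b j)) = real (\<Sum>j<M. \<mu> j) - real (\<Sum>j<M. hf b j)"
        by (simp add: sum_subtractf)
      also have "\<dots> = real (Suc N + k) - real k"
        using sum_hf_ok[OF True] sum_hf_G[OF b] by (simp add: \<mu>_def)
      finally show ?thesis by simp
    qed
    have "Poly_Mapping.lookup (Tsq M * H) a = (\<Sum>j<M. fact N / D * (\<Sum>b\<in>Poly_Mapping.keys G. T j b))"
      unfolding L by (rule sum.cong) (simp_all add: perj)
    also have "\<dots> = fact N / D * (\<Sum>b\<in>Poly_Mapping.keys G. \<Sum>j<M. T j b)"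
      by (simp add: sum_distrib_left sum.swap[of _ "{..<M}"])
    also have "\<dots> = fact N / D * (\<Sum>b\<in>Poly_Mapping.keys G. Poly_Mapping.lookup G b * (\<Prod>i<M. ffr (\<mu> i) (hf b i)) * real (Suc N))"
      unfolding T_def by (intro arg_cong[where f="\<lambda>t. _ * t"] sum.cong refl) (simp add: sum_distrib_left[symmetric] sm)
    also have "\<dots> = fact N / D * (Sf a * real (Suc N))"
      unfolding Sf_def \<mu>_def sum_distrib_right ..
    also have "\<dots> = Q (Suc N) a"
      using True by (simp add: Q_def D_def \<mu>_def fact_Suc mult_ac)
    finally show ?thesis .
  qed
qed

lemma closed: "Poly_Mapping.lookup (Tsq M ^ N * G) a = Q N a"
proof (induction N arbitrary: a)
  case 0 then show ?case by (simp add: base)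
next
  case (Suc N)
  have "Tsq M ^ Suc N * G = Tsq M * (Tsq M ^ N * G)" by (simp add: mult.assoc)
  then show ?case using step[OF Suc.IH] by (simp add: mult.assoc)
qed

lemma hf_le_k: "b \<in> Poly_Mapping.keys G \<Longrightarrow> i < M \<Longrightarrow> hf b i \<le> k"
  using member_le_sum[of i "{..<M}" "hf b"] sum_hf_G[of b] by simp

lemma Sf_nonneg:
  fixes lam :: real
  assumes ok: "okN N a" and N1: "N \<ge> 1" and lam: "lam > 0"
    and sph: "\<And>u. (\<Sum>i<M. u i ^ 2) = 1 \<Longrightarrow> mp_eval u G \<ge> lam"
    and cond: "real k ^ 2 * (\<Sum>b\<in>Poly_Mapping.keys G. \<bar>Poly_Mapping.lookup G b\<bar>) \<le> real N * lam"
  shows "Sf a \<ge> 0"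
proof -
  define t where "t = N + k"
  define rt where "rt = real t"
  have rt1: "rt \<ge> 1" using N1 by (simp add: rt_def t_def)
  have rtk: "real k \<le> rt" by (simp add: rt_def t_def)
  define \<mu> where "\<mu> = hf a"
  have smu: "(\<Sum>i<M. \<mu> i) = t" using sum_hf_ok[OF ok] by (simp add: \<mu>_def t_def)
  define x where "x i = real (\<mu> i) / rt" for i
  have x01: "0 \<le> x i \<and> x i \<le> 1" if "i < M" for i
  proof -
    have "\<mu> i \<le> t" using member_le_sum[of i "{..<M}" \<mu>] that smu by simp
    then show ?thesis using rt1 by (simp add: x_def rt_def field_simps)
  qed
  define u where "u i = sqrt (x i)" for i
  have sx: "(\<Sum>i<M. x i) = 1"
  proof -
    have "(\<Sum>i<M. x i) = real (\<Sum>i<M. \<mu> i) / rt" by (simp add: x_def sum_divide_distrib)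
    then show ?thesis using smu rt1 by (simp add: rt_def)
  qed
  have su: "(\<Sum>i<M. u i ^ 2) = 1"
    using sx x01 by (simp add: u_def)
  define B where "B b = (\<Prod>i<M. x i ^ hf b i)" for b
  define A where "A b = (\<Prod>i<M. \<Prod>j<hf b i. x i - real j / rt)" for b
  define L where "L = (\<Sum>b\<in>Poly_Mapping.keys G. \<bar>Poly_Mapping.lookup G b\<bar>)"
  have monB: "monv u b = B b" if b: "b \<in> Poly_Mapping.keys G" for b
  proof -
    have "monv u b = (\<Prod>i<M. u i ^ Poly_Mapping.lookup b i)"
      by (rule monv_superset) (use keysG[OF b] in auto)
    also have "\<dots> = B b" unfolding B_def
    proof (rule prod.cong[OF refl])
      fix i assume "i \<in> {..<M}"
      then have "x i \<ge> 0" using x01 by simp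
      have "Poly_Mapping.lookup b i = 2 * hf b i" using keysG[OF b] by (simp add: hf_def)
      then show "u i ^ Poly_Mapping.lookup b i = x i ^ hf b i"
        using \<open>x i \<ge> 0\<close> by (simp add: u_def power_mult)
    qed
    finally show ?thesis .
  qed
  have EB: "(\<Sum>b\<in>Poly_Mapping.keys G. Poly_Mapping.lookup G b * B b) \<ge> lam"
  proof -
    have "mp_eval u G = (\<Sum>b\<in>Poly_Mapping.keys G. Poly_Mapping.lookup G b * B b)"
      unfolding mp_eval_ext ext_def by (rule sum.cong) (simp_all add: monB)
    then show ?thesis using sph[OF su] by simp
  qed
  have ffrA: "(\<Prod>i<M. ffr (\<mu> i) (hf b i)) = rt ^ k * A b" if b: "b \<in> Poly_Mapping.keys G" for b
  proof -
    have "ffr (\<mu> i) (hf b i) = rt ^ hf b i * (\<Prod>j<hf b i. x i - real j / rt)" for i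
    proof -
      have "ffr (\<mu> i) (hf b i) = (\<Prod>j<hf b i. rt * (x i - real j / rt))"
        unfolding ffr_def using rt1 by (intro prod.cong refl) (simp add: x_def field_simps)
      then show ?thesis by (simp add: prod.distrib)
    qed
    then have "(\<Prod>i<M. ffr (\<mu> i) (hf b i)) = rt ^ (\<Sum>i<M. hf b i) * A b"
      by (simp add: A_def prod.distrib power_sum)
    then show ?thesis using sum_hf_G[OF b] by simp
  qed
  have pd: "\<bar>A b - B b\<bar> \<le> real k ^ 2 / rt" if b: "b \<in> Poly_Mapping.keys G" for b
  proof -
    have in1: "\<bar>x i - real j / rt\<bar> \<le> 1" if "i < M" "j < hf b i" for i j
    proof -
      have "real j \<le> rt" using hf_le_k[OF b \<open>i < M\<close>] that(2) rtk by linarith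
      then have "real j / rt \<le> 1" using rt1 by simp
      moreover have "real j / rt \<ge> 0" using rt1 by simp
      ultimately show ?thesis using x01[OF that(1)] by linarith
    qed
    have ai: "\<bar>\<Prod>j<hf b i. x i - real j / rt\<bar> \<le> 1" if "i < M" for i
      unfolding abs_prod by (rule prod_le_1) (use in1 that in auto)
    have bi: "\<bar>x i ^ hf b i\<bar> \<le> 1" if "i < M" for i
      using x01[OF that] by (simp add: power_le_one)
    have di: "\<bar>(\<Prod>j<hf b i. x i - real j / rt) - x i ^ hf b i\<bar> \<le> real (hf b i) * real k / rt" if "i < M" for i
    proof -
      have "\<bar>(\<Prod>j<hf b i. x i - real j / rt) - (\<Prod>j<hf b i. x i)\<bar> \<le> (\<Sum>j<hf b i. \<bar>(x i - real j / rt) - x i\<bar>)"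
        by (rule prod_diff_le) (use in1[OF that] x01[OF that] in auto)
      also have "\<dots> \<le> (\<Sum>j<hf b i. real k / rt)"
      proof (rule sum_mono)
        fix j assume "j \<in> {..<hf b i}"
        then have "real j \<le> real k" using hf_le_k[OF b that] by simp
        then show "\<bar>(x i - real j / rt) - x i\<bar> \<le> real k / rt"
          using rt1 by (simp add: divide_right_mono)
      qed
      finally show ?thesis by simp
    qed
    have "\<bar>A b - B b\<bar> \<le> (\<Sum>i<M. \<bar>(\<Prod>j<hf b i. x i - real j / rt) - x i ^ hf b i\<bar>)"
      unfolding A_def B_def by (rule prod_diff_le) (use ai bi in auto)
    also have "\<dots> \<le> (\<Sum>i<M. real (hf b i) * real k / rt)"
      by (rule sum_mono) (use di in auto)
    also have "\<dots> = real (\<Sum>i<M. hf b i) * real k / rt"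
      by (simp add: sum_distrib_right sum_divide_distrib)
    also have "\<dots> = real k ^ 2 / rt" using sum_hf_G[OF b] by (simp add: power2_eq_square)
    finally show ?thesis .
  qed
  have "(\<Sum>b\<in>Poly_Mapping.keys G. Poly_Mapping.lookup G b * B b) - (\<Sum>b\<in>Poly_Mapping.keys G. Poly_Mapping.lookup G b * A b)
      \<le> (\<Sum>b\<in>Poly_Mapping.keys G. \<bar>Poly_Mapping.lookup G b\<bar> * (real k ^ 2 / rt))"
  proof -
    have "(\<Sum>b\<in>Poly_Mapping.keys G. Poly_Mapping.lookup G b * B b) - (\<Sum>b\<in>Poly_Mapping.keys G. Poly_Mapping.lookup G b * A b)
        = (\<Sum>b\<in>Poly_Mapping.keys G. Poly_Mapping.lookup G b * (B b - A b))"
      by (simp add: sum_subtractf right_diff_distrib)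
    also have "\<dots> \<le> (\<Sum>b\<in>Poly_Mapping.keys G. \<bar>Poly_Mapping.lookup G b\<bar> * (real k ^ 2 / rt))"
    proof (rule sum_mono)
      fix b assume b: "b \<in> Poly_Mapping.keys G"
      have "Poly_Mapping.lookup G b * (B b - A b) \<le> \<bar>Poly_Mapping.lookup G b\<bar> * \<bar>B b - A b\<bar>"
        by (metis abs_ge_self abs_mult)
      also have "\<dots> \<le> \<bar>Poly_Mapping.lookup G b\<bar> * (real k ^ 2 / rt)"
        using pd[OF b] by (intro mult_left_mono) (auto simp: abs_minus_commute)
      finally show "Poly_Mapping.lookup G b * (B b - A b) \<le> \<bar>Poly_Mapping.lookup G b\<bar> * (real k ^ 2 / rt)" .
    qed
    finally show ?thesis .
  qed
  also have "\<dots> = L * real k ^ 2 / rt" by (simp add: L_def sum_distrib_right sum_divide_distrib)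
  also have "\<dots> \<le> lam"
  proof -
    have "L * real k ^ 2 \<le> real N * lam" using cond by (simp add: L_def mult.commute)
    also have "\<dots> \<le> rt * lam" using lam by (intro mult_right_mono) (auto simp: rt_def t_def)
    finally show ?thesis using rt1 by (simp add: divide_le_eq mult.commute)
  qed
  finally have "(\<Sum>b\<in>Poly_Mapping.keys G. Poly_Mapping.lookup G b * A b) \<ge> 0" using EB by linarith
  moreover have "Sf a = rt ^ k * (\<Sum>b\<in>Poly_Mapping.keys G. Poly_Mapping.lookup G b * A b)"
    unfolding Sf_def \<mu>_def[symmetric] sum_distrib_left
    by (rule sum.cong) (simp_all add: ffrA)
  ultimately show ?thesis using rt1 by simp
qed

theorem polya:
  fixes lam :: real
  assumes N1: "N \<ge> 1" and lam: "lam > 0"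
    and sph: "\<And>u. (\<Sum>i<M. u i ^ 2) = 1 \<Longrightarrow> mp_eval u G \<ge> lam"
    and cond: "real k ^ 2 * (\<Sum>b\<in>Poly_Mapping.keys G. \<bar>Poly_Mapping.lookup G b\<bar>) \<le> real N * lam"
  shows "Poly_Mapping.lookup (Tsq M ^ N * G) a \<ge> 0"
proof (cases "okN N a")
  case True
  have "fact N / (\<Prod>i<M. fact (hf a i)) * Sf a \<ge> 0"
    using Sf_nonneg[OF True N1 lam sph cond] prod_fact_pos[of "hf a"] by simp
  then show ?thesis using True by (simp add: closed Q_def)
qed (simp add: closed Q_def)
end

lemma mp_deg_keys: "a \<in> Poly_Mapping.keys q \<Longrightarrow> mon_deg a \<le> mp_deg q"
  unfolding mp_deg_def by (intro Max_ge) auto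

lemma monv_cong: "(\<And>i. i \<in> Poly_Mapping.keys a \<Longrightarrow> x i = y i) \<Longrightarrow> monv x a = monv y a"
  unfolding monv_def by (rule prod.cong) auto

lemma eval_homogenize:
  assumes vq: "mp_vars q \<subseteq> {..<n}" and dq: "mp_deg q \<le> k" and y: "y \<ge> n" and zy: "z y \<noteq> 0"
  shows "mp_eval z (mp_homogenize k y q) = z y ^ k * mp_eval (\<lambda>i. if i < n then z i / z y else 0) q"
proof -
  define x where "x = (\<lambda>i. if i < n then z i / z y else 0)"
  have "mp_eval z (mp_homogenize k y q) =
      (\<Sum>a\<in>Poly_Mapping.keys q. Poly_Mapping.lookup q a * (monv z a * z y ^ (k - mon_deg a)))"
    unfolding mp_homogenize_def mp_eval_sum mp_eval_single monv_add monv_single ..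
  also have "\<dots> = (\<Sum>a\<in>Poly_Mapping.keys q. Poly_Mapping.lookup q a * (z y ^ k * monv x a))"
  proof (rule sum.cong[OF refl])
    fix a assume a: "a \<in> Poly_Mapping.keys q"
    have ka: "Poly_Mapping.keys a \<subseteq> {..<n}" using vq a by (auto simp: mp_vars_def)
    have "monv z a = monv (\<lambda>i. z y * x i) a"
      by (rule monv_cong) (use ka zy in \<open>auto simp: x_def\<close>)
    also have "\<dots> = z y ^ mon_deg a * monv x a" by (rule monv_scale)
    finally have "monv z a * z y ^ (k - mon_deg a) = z y ^ (mon_deg a + (k - mon_deg a)) * monv x a"
      by (simp add: power_add)
    also have "mon_deg a + (k - mon_deg a) = k" using mp_deg_keys[OF a] dq by simp
    finally show "Poly_Mapping.lookup q a * (monv z a * z y ^ (k - mon_deg a)) = Poly_Mapping.lookup q a * (z y ^ k * monv x a)"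
      by simp
  qed
  also have "\<dots> = z y ^ k * mp_eval x q"
    by (simp add: mp_eval_ext ext_def sum_distrib_left mult_ac)
  finally show ?thesis unfolding x_def .
qed

locale thmctx =
  fixes n m d :: nat and p :: mpoly and g :: "nat \<Rightarrow> mpoly"
    and R \<beta> :: real and \<eta> :: "nat \<Rightarrow> real"
    and S :: "(nat \<Rightarrow> real) set" and pstar :: ereal
  assumes vars: "mp_vars p \<subseteq> {..<n}" "\<And>i. i \<in> {1..m} \<Longrightarrow> mp_vars (g i) \<subseteq> {..<n}"
    and d_def: "d = max 1 ((Max (insert (mp_deg p) ((\<lambda>i. mp_deg (g i)) ` {1..m})) + 1) div 2)"
    and S_def: "S = {x. (\<forall>i\<ge>n. x i = 0) \<and> (\<forall>i\<in>{1..m}. mp_eval x (g i) \<ge> 0)}"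
    and pstar_def: "pstar = Inf ((\<lambda>x. ereal (mp_eval x p)) ` S)"
    and R_pos: "R > 0"
    and R_bound: "\<And>x. x \<in> S \<Longrightarrow> (\<Sum>i<n. x i ^ 2) \<le> R"
    and eta_bound: "\<And>i x. i \<in> {1..m} \<Longrightarrow> x \<in> S \<Longrightarrow> mp_eval x (g i) \<le> \<eta> i"
    and beta_bound: "\<And>x. x \<in> S \<Longrightarrow> - mp_eval x p \<le> \<beta>"
begin

abbreviation "fg \<gamma> \<equiv> f_gamma n m d p g R \<eta> \<beta> \<gamma>"
abbreviation "H q \<equiv> mp_homogenize (2*d) (n + m + 2) q"
abbreviation "Rt \<gamma> \<equiv> R + (\<Sum>i=1..m. \<eta> i) + \<beta> + \<gamma>"

lemma d1: "d \<ge> 1" using d_def by simp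

lemma deg_bounds: "mp_deg p \<le> 2*d" "\<And>i. i \<in> {1..m} \<Longrightarrow> mp_deg (g i) \<le> 2*d"
proof -
  define Mx where "Mx = Max (insert (mp_deg p) ((\<lambda>i. mp_deg (g i)) ` {1..m}))"
  have "Mx \<le> 2 * ((Mx + 1) div 2)" by presburger
  also have "\<dots> \<le> 2 * d" using d_def by (simp add: Mx_def)
  finally have Mx: "Mx \<le> 2*d" .
  show "mp_deg p \<le> 2*d" using Mx unfolding Mx_def by (meson Max_ge finite_imageI finite_atLeastAtMost finite_insert insertI1 order_trans)
  show "mp_deg (g i) \<le> 2*d" if "i \<in> {1..m}" for i
  proof -
    have "mp_deg (g i) \<le> Mx" unfolding Mx_def using that by (intro Max_ge) auto
    then show ?thesis using Mx by simp
  qed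
qed

lemma eval_fg:
  "mp_eval z (fg \<gamma>) =
     (\<gamma> * z (n+m+2) ^ (2*d) - mp_eval z (H p) - z (n+0) ^ 2 * z (n+m+2) ^ (2*d - 2)) ^ 2
     + (\<Sum>i=1..m. (mp_eval z (H (g i)) - z (n+i) ^ 2 * z (n+m+2) ^ (2*d - 2)) ^ 2)
     + (Rt \<gamma> ^ d * z (n+m+2) ^ (2*d) - ((\<Sum>i<n. z i ^ 2) + (\<Sum>j=0..m. z (n+j) ^ 2)) ^ d - z (n + (m+1)) ^ (2*d)) ^ 2"
  by (simp add: f_gamma_def Let_def)

lemma fg_nonneg: "mp_eval z (fg \<gamma>) \<ge> 0"
  unfolding eval_fg by (intro add_nonneg_nonneg sum_nonneg) auto

lemma S_le_pstar: "x \<in> S \<Longrightarrow> pstar \<le> ereal (mp_eval x p)"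
  unfolding pstar_def by (rule Inf_lower) blast

lemma pos_def:
  assumes gp: "ereal \<gamma> < pstar" and zpos: "(\<Sum>i<n+m+3. z i ^ 2) > 0"
  shows "mp_eval z (fg \<gamma>) > 0"
proof (rule ccontr)
  assume "\<not> mp_eval z (fg \<gamma>) > 0"
  then have f0: "mp_eval z (fg \<gamma>) = 0" using fg_nonneg[of z \<gamma>] by simp
  define Y where "Y = z (n+m+2)"
  define A where "A = (\<Sum>i<n. z i ^ 2) + (\<Sum>j=0..m. z (n+j) ^ 2)"
  have t1: "\<gamma> * Y ^ (2*d) - mp_eval z (H p) - z (n+0) ^ 2 * Y ^ (2*d - 2) = 0"
   and t2: "(\<Sum>i=1..m. (mp_eval z (H (g i)) - z (n+i) ^ 2 * Y ^ (2*d - 2)) ^ 2) = 0"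
   and t3: "Rt \<gamma> ^ d * Y ^ (2*d) - A ^ d - z (n + (m+1)) ^ (2*d) = 0"
    using f0 unfolding eval_fg Y_def[symmetric] A_def[symmetric]
    by (simp_all add: add_nonneg_eq_0_iff sum_nonneg)
  have t2': "mp_eval z (H (g i)) = z (n+i) ^ 2 * Y ^ (2*d - 2)" if "i \<in> {1..m}" for i
    using t2 sum_nonneg_eq_0_iff[of "{1..m}" "\<lambda>i. (mp_eval z (H (g i)) - z (n+i) ^ 2 * Y ^ (2*d - 2)) ^ 2"] that
    by simp
  show False
  proof (cases "Y = 0")
    case True
    have "Rt \<gamma> ^ d * Y ^ (2*d) = 0" using True d1 by simp
    then have "A ^ d + z (n + (m+1)) ^ (2*d) = 0" using t3 by linarith
    moreover have "A \<ge> 0" unfolding A_def by (intro add_nonneg_nonneg sum_nonneg) auto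
    moreover have "z (n + (m+1)) ^ (2*d) \<ge> 0" by (simp add: power_mult)
    ultimately have A0: "A = 0" and s0: "z (n + (m+1)) = 0"
      using d1 by (simp_all add: add_nonneg_eq_0_iff)
    have a1: "(\<Sum>i<n. z i ^ 2) = 0" and a2: "(\<Sum>j=0..m. z (n+j) ^ 2) = 0"
      using A0 unfolding A_def by (simp_all add: add_nonneg_eq_0_iff sum_nonneg)
    have "z i = 0" if "i < n+m+3" for i
    proof -
      have "i < n \<or> (n \<le> i \<and> i \<le> n + m) \<or> i = n + m + 1 \<or> i = n + m + 2"
        using that by linarith
      then consider "i < n" | "n \<le> i" "i \<le> n + m" | "i = n + m + 1" | "i = n + m + 2"
        by blast
      then show ?thesis
      proof cases
        case 1 then show ?thesis using a1 by (simp add: sum_nonneg_eq_0_iff)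
      next
        case 2
        then have "i - n \<in> {0..m}" by auto
        then have "z (n + (i - n)) = 0" using a2 by (simp add: sum_nonneg_eq_0_iff)
        then show ?thesis using 2 by simp
      next
        case 3 then show ?thesis using s0 by simp
      next
        case 4 then show ?thesis using True by (simp add: Y_def)
      qed
    qed
    then have "(\<Sum>i<n+m+3. z i ^ 2) = 0" by simp
    then show False using zpos by simp
  next
    case False
    define x where "x = (\<lambda>i. if i < n then z i / Y else 0)"
    have e2: "2*d = 2 + (2*d - 2)" using d1 by simp
    have Y2: "Y ^ (2*d) = Y ^ 2 * Y ^ (2*d - 2)" by (subst e2) (simp only: power_add)
    have Ypos: "Y ^ (2*d) > 0" using False by (simp add: power_mult)
    have Yp2: "Y ^ (2*d - 2) > 0" using False by (simp add: power_mult_numeral zero_less_power_eq)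
    have Hp: "mp_eval z (H p) = Y ^ (2*d) * mp_eval x p"
      unfolding Y_def x_def by (rule eval_homogenize) (use vars deg_bounds False in \<open>auto simp: Y_def\<close>)
    have Hg: "mp_eval z (H (g i)) = Y ^ (2*d) * mp_eval x (g i)" if "i \<in> {1..m}" for i
      unfolding Y_def x_def by (rule eval_homogenize) (use vars deg_bounds False that in \<open>auto simp: Y_def\<close>)
    have "x \<in> S"
    proof -
      have "mp_eval x (g i) \<ge> 0" if i: "i \<in> {1..m}" for i
      proof -
        have "Y ^ (2*d) * mp_eval x (g i) = z (n+i) ^ 2 * Y ^ (2*d - 2)" using t2'[OF i] Hg[OF i] by simp
        moreover have "z (n+i) ^ 2 * Y ^ (2*d - 2) \<ge> 0" using Yp2 by simp
        ultimately show ?thesis using Ypos by (metis zero_le_mult_iff not_le)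
      qed
      then show ?thesis unfolding S_def x_def by auto
    qed
    then have "ereal \<gamma> < ereal (mp_eval x p)" using gp S_le_pstar by (metis less_le_trans)
    then have lt: "\<gamma> < mp_eval x p" by simp
    have "Y ^ (2*d) * (\<gamma> - mp_eval x p) = z (n+0) ^ 2 * Y ^ (2*d - 2)"
      using t1 Hp by (simp add: algebra_simps)
    moreover have "Y ^ (2*d) * (\<gamma> - mp_eval x p) < 0" using lt Ypos by (simp add: mult_pos_neg)
    moreover have "z (n+0) ^ 2 * Y ^ (2*d - 2) \<ge> 0" using Yp2 by simp
    ultimately show False by linarith
  qed
qed


lemma zero_point:
  assumes xS: "x \<in> S" and lt: "mp_eval x p < \<gamma>"
  shows "\<exists>z. z (n+m+2) = 1 \<and> mp_eval z (fg \<gamma>) = 0"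
proof -
  have x0: "\<forall>i\<ge>n. x i = 0" and gx: "\<And>i. i \<in> {1..m} \<Longrightarrow> mp_eval x (g i) \<ge> 0"
    using xS by (auto simp: S_def)
  define A where "A = (\<Sum>i<n. x i ^ 2) + (\<gamma> - mp_eval x p) + (\<Sum>j=1..m. mp_eval x (g j))"
  define s where "s = root (2*d) (Rt \<gamma> ^ d - A ^ d)"
  define z where "z i = (if i < n then x i else if i = n then sqrt (\<gamma> - mp_eval x p)
      else if i \<le> n + m then sqrt (mp_eval x (g (i - n))) else if i = n+m+1 then s
      else if i = n+m+2 then 1 else 0)" for i
  have A0: "A \<ge> 0" unfolding A_def using lt gx by (intro add_nonneg_nonneg sum_nonneg) auto
  have AR: "A \<le> Rt \<gamma>"
  proof -
    have "(\<Sum>j=1..m. mp_eval x (g j)) \<le> (\<Sum>j=1..m. \<eta> j)"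
      by (rule sum_mono) (use eta_bound xS in auto)
    then show ?thesis unfolding A_def using R_bound[OF xS] beta_bound[OF xS] by linarith
  qed
  have Ad: "A ^ d \<le> Rt \<gamma> ^ d" using A0 AR by (intro power_mono)
  have s2d: "s ^ (2*d) = Rt \<gamma> ^ d - A ^ d"
    unfolding s_def using d1 Ad by (intro real_root_pow_pos2) auto
  have xz: "(\<lambda>i. if i < n then z i / z (n+m+2) else 0) = x"
    using x0 by (auto simp: z_def fun_eq_iff)
  have Hp: "mp_eval z (H p) = mp_eval x p"
    using eval_homogenize[of p n "2*d" "n+m+2" z] vars deg_bounds xz by (simp add: z_def)
  have Hg: "mp_eval z (H (g i)) = mp_eval x (g i)" if "i \<in> {1..m}" for i
    using eval_homogenize[of "g i" n "2*d" "n+m+2" z] vars deg_bounds xz that by (simp add: z_def)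
  have zn: "z (n+0) ^ 2 = \<gamma> - mp_eval x p" using lt by (simp add: z_def)
  have zi: "z (n+i) ^ 2 = mp_eval x (g i)" if "i \<in> {1..m}" for i
    using that gx[OF that] by (simp add: z_def)
  have sumz: "(\<Sum>i<n. z i ^ 2) + (\<Sum>j=0..m. z (n+j) ^ 2) = A"
  proof -
    have "(\<Sum>j=0..m. z (n+j) ^ 2) = z (n+0) ^ 2 + (\<Sum>j=Suc 0..m. z (n+j) ^ 2)"
      by (rule sum.atLeast_Suc_atMost) simp
    also have "(\<Sum>j=Suc 0..m. z (n+j) ^ 2) = (\<Sum>j=1..m. mp_eval x (g j))"
      by (rule sum.cong) (simp_all add: zi)
    finally show ?thesis unfolding A_def zn by (simp add: z_def)
  qed
  have z2: "z (n+m+2) = 1" by (simp add: z_def)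
  have zs: "z (n + (m+1)) = s" by (simp add: z_def)
  have sum0: "(\<Sum>i=1..m. (mp_eval z (H (g i)) - z (n+i) ^ 2 * z (n+m+2) ^ (2*d - 2)) ^ 2) = 0"
  proof (intro sum.neutral ballI)
    fix i assume i: "i \<in> {1..m}"
    show "(mp_eval z (H (g i)) - z (n+i) ^ 2 * z (n+m+2) ^ (2*d - 2)) ^ 2 = 0"
      unfolding Hg[OF i] zi[OF i] z2 by simp
  qed
  have "mp_eval z (fg \<gamma>) = 0"
    unfolding eval_fg sum0 unfolding Hp sumz zn z2 zs s2d by simp
  then show ?thesis by (intro exI[of _ z]) (simp add: z_def)
qed

end

lemma Pol_eval:
  assumes q: "q \<in> Pol r n' d'" and u: "\<And>i. u i \<ge> 0"
  shows "(mp_eval (\<lambda>i. u i ^ 2 - u (n'+i) ^ 2) q + 1 / (2 * real r) * (\<Sum>i<n'. u i ^ 4 + u (n'+i) ^ 4) ^ d')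
      * (\<Sum>i<n'. u i ^ 2 + u (n'+i) ^ 2) ^ (r ^ 2) \<ge> 0"
proof -
  define P where "P = (mp_subst (\<lambda>i. mp_var i ^ 2 - mp_var (n' + i) ^ 2) q
                + mp_const (1 / (2 * real r)) * (\<Sum>i<n'. mp_var i ^ 4 + mp_var (n' + i) ^ 4) ^ d')
              * (\<Sum>i<n'. mp_var i ^ 2 + mp_var (n' + i) ^ 2) ^ (r ^ 2)"
  have "\<forall>a. mp_coeff P a \<ge> 0" using q unfolding Pol_def P_def Let_def by blast
  then have "mp_eval u P \<ge> 0" by (intro mp_eval_nonneg u) (simp add: mp_coeff_def)
  then show ?thesis by (simp add: P_def mp_eval_subst)
qed

lemma Pol_vars: "q \<in> Pol r n' d' \<Longrightarrow> mp_vars q \<subseteq> {..<n'}"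
  by (simp add: Pol_def)

context thmctx begin

lemma partA:
  assumes r: "r \<ge> 1" and mem: "fg \<gamma> - mp_const (1 / real r) * (\<Sum>i<n+m+3. mp_var i ^ 2) ^ (2*d) \<in> Pol r (n+m+3) (2*d)"
  shows "ereal \<gamma> \<le> pstar"
proof (rule ccontr)
  assume "\<not> ereal \<gamma> \<le> pstar"
  then have "pstar < ereal \<gamma>" by simp
  then obtain x where xS: "x \<in> S" and "ereal (mp_eval x p) < ereal \<gamma>"
    unfolding pstar_def by (auto simp: Inf_less_iff)
  then have "mp_eval x p < \<gamma>" by simp
  then obtain z where z1: "z (n+m+2) = 1" and f0: "mp_eval z (fg \<gamma>) = 0"
    using zero_point[OF xS] by blast
  define N' where "N' = n+m+3"
  define q where "q = fg \<gamma> - mp_const (1 / real r) * (\<Sum>i<N'. mp_var i ^ 2) ^ (2*d)"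
  have qP: "q \<in> Pol r N' (2*d)" using mem by (simp add: q_def N'_def)
  define u where "u i = (if i < N' then sqrt (max (z i) 0) else if i < 2*N' then sqrt (max (- z (i - N')) 0) else 0)" for i
  have u0: "u i \<ge> 0" for i by (simp add: u_def)
  have uz: "u i ^ 2 - u (N'+i) ^ 2 = z i" if "i < N'" for i
    using that by (auto simp: u_def max_def)
  have u4: "u i ^ 4 + u (N'+i) ^ 4 = z i ^ 2" if "i < N'" for i
  proof -
    have "u i ^ 4 = (max (z i) 0) ^ 2" "u (N'+i) ^ 4 = (max (- z i) 0) ^ 2"
      using that by (simp_all add: u_def power4_eq_xxxx power2_eq_square real_sqrt_mult[symmetric])
    then show ?thesis by (auto simp: max_def power2_eq_square)
  qed
  have u2: "u i ^ 2 + u (N'+i) ^ 2 = \<bar>z i\<bar>" if "i < N'" for i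
    using that by (auto simp: u_def max_def)
  define sz where "sz = (\<Sum>i<N'. z i ^ 2)"
  have sz1: "sz \<ge> 1"
  proof -
    have "z (n+m+2) ^ 2 \<le> sz" unfolding sz_def by (rule member_le_sum) (auto simp: N'_def)
    then show ?thesis using z1 by simp
  qed
  have evq: "mp_eval (\<lambda>i. u i ^ 2 - u (N'+i) ^ 2) q = mp_eval z q"
    by (rule mp_eval_vars[OF Pol_vars[OF qP]]) (simp add: uz)
  have "mp_eval z q = - (1 / real r) * sz ^ (2*d)"
    unfolding q_def sz_def using f0 by simp
  moreover have E1: "(\<Sum>i<N'. u i ^ 4 + u (N'+i) ^ 4) = sz" unfolding sz_def by (rule sum.cong) (simp_all add: u4)
  moreover have E2: "(\<Sum>i<N'. u i ^ 2 + u (N'+i) ^ 2) > 0"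
  proof -
    have "\<bar>z (n+m+2)\<bar> \<le> (\<Sum>i<N'. \<bar>z i\<bar>)" by (rule member_le_sum) (auto simp: N'_def)
    moreover have "(\<Sum>i<N'. u i ^ 2 + u (N'+i) ^ 2) = (\<Sum>i<N'. \<bar>z i\<bar>)" by (rule sum.cong) (simp_all add: u2)
    ultimately show ?thesis using z1 by simp
  qed
  ultimately have h1: "(- (1 / real r) * sz ^ (2*d) + 1 / (2 * real r) * sz ^ (2*d)) * (\<Sum>i<N'. u i ^ 2 + u (N'+i) ^ 2) ^ (r ^ 2) \<ge> 0"
    using Pol_eval[OF qP, where u=u] u0 unfolding evq E1 by simp
  have h2: "(\<Sum>i<N'. u i ^ 2 + u (N'+i) ^ 2) ^ (r ^ 2) > 0" using E2 by simp
  have h3: "- (1 / real r) * sz ^ (2*d) + 1 / (2 * real r) * sz ^ (2*d) < 0"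
  proof -
    have "sz ^ (2*d) > 0" using sz1 by simp
    moreover have "- (1 / real r) * sz ^ (2*d) + 1 / (2 * real r) * sz ^ (2*d) = - (sz ^ (2*d) / (2 * real r))"
      using r by (simp add: field_simps)
    ultimately show ?thesis using r by simp
  qed
  show False using mult_neg_pos[OF h3 h2] h1 by linarith
qed

end

lemma cont_eval: "continuous_on UNIV (\<lambda>z::nat\<Rightarrow>real. mp_eval z q)"
  unfolding mp_eval_def
  by (intro continuous_on_sum continuous_on_mult continuous_on_const continuous_on_prod
      continuous_on_power continuous_on_product_coordinates)

lemma compact_box: "compact {z::nat\<Rightarrow>real. \<forall>i. z i \<in> (if i < N then {-1..1} else {0})}"
proof -
  define Bx where "Bx = (\<lambda>i::nat. if i < N then {-1..1::real} else {0})"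
  have "compactin (product_topology (\<lambda>i. euclidean) UNIV) (PiE UNIV Bx)"
    by (subst compactin_PiE) (auto simp: compactin_euclidean_iff Bx_def)
  then have "compact (PiE UNIV Bx)"
    by (simp add: euclidean_product_topology compactin_euclidean_iff)
  moreover have "PiE UNIV Bx = {z. \<forall>i. z i \<in> Bx i}" by (auto simp: PiE_def Pi_def)
  ultimately show ?thesis by (simp add: Bx_def)
qed

lemma hom_min:
  assumes hf: "hp (2*e) {..<N} f" and e1: "e \<ge> 1" and N1: "N \<ge> 1"
    and pos: "\<And>z. (\<Sum>i<N. z i ^ 2) > 0 \<Longrightarrow> mp_eval z f > 0"
  shows "\<exists>\<epsilon>>0. \<forall>z. mp_eval z f \<ge> \<epsilon> * (\<Sum>i<N. z i ^ 2) ^ e"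
proof -
  define K where "K = {z::nat\<Rightarrow>real. \<forall>i. z i \<in> (if i < N then {-1..1} else {0})} \<inter> {z. (\<Sum>i<N. z i ^ 2) = 1}"
  have cK: "compact K" unfolding K_def
    by (intro compact_Int_closed compact_box closed_Collect_eq continuous_on_sum continuous_on_power
        continuous_on_product_coordinates continuous_on_const)
  define z1 where "z1 = (\<lambda>i::nat. if i = 0 then 1 else (0::real))"
  have "z1 \<in> K"
  proof -
    have "(\<Sum>i<N. z1 i ^ 2) = (\<Sum>i<N. if i = 0 then 1 else 0)" by (intro sum.cong) (auto simp: z1_def)
    also have "\<dots> = 1" using N1 by simp
    finally show ?thesis using N1 by (auto simp: K_def z1_def)
  qed
  then have neK: "K \<noteq> {}" by blast
  obtain z0 where z0: "z0 \<in> K" and zmin: "\<And>z. z \<in> K \<Longrightarrow> mp_eval z0 f \<le> mp_eval z f"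
    using continuous_attains_inf[OF cK neK continuous_on_subset[OF cont_eval[of f]]] by blast
  define \<epsilon> where "\<epsilon> = mp_eval z0 f"
  have epos: "\<epsilon> > 0" unfolding \<epsilon>_def using z0 by (intro pos) (simp add: K_def)
  have vf: "mp_vars f \<subseteq> {..<N}" by (rule hp_vars[OF hf])
  have "mp_eval z f \<ge> \<epsilon> * (\<Sum>i<N. z i ^ 2) ^ e" for z
  proof -
    define s where "s = (\<Sum>i<N. z i ^ 2)"
    define zr where "zr = (\<lambda>i. if i < N then z i else 0)"
    have fz: "mp_eval z f = mp_eval zr f" by (rule mp_eval_vars[OF vf]) (simp add: zr_def)
    show ?thesis
    proof (cases "s = 0")
      case True
      have "zr = (\<lambda>i. 0 * zr i)"
      proof
        fix i show "zr i = 0 * zr i"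
          using True unfolding s_def zr_def by (auto simp: sum_nonneg_eq_0_iff)
      qed
      then have "mp_eval zr f = 0 ^ (2*e) * mp_eval zr f" using mp_eval_scale[OF hf, of 0 zr] by simp
      moreover have "(0::real) ^ (2*e) = 0" using e1 by simp
      ultimately have "mp_eval zr f = 0" by simp
      moreover have "(\<Sum>i<N. z i ^ 2) ^ e = 0" using e1 True by (simp add: s_def)
      ultimately show ?thesis using fz e1 by (simp add: zero_power)
    next
      case False
      have s0: "s > 0" using False unfolding s_def by (metis sum_nonneg zero_le_power2 order_le_neq_trans)
      define c where "c = 1 / sqrt s"
      have cpos: "c > 0" using s0 by (simp add: c_def)
      define z' where "z' = (\<lambda>i. c * zr i)"
      have "z' \<in> K"
      proof -
        have sq: "(\<Sum>i<N. z' i ^ 2) = 1"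
        proof -
          have "(\<Sum>i<N. z' i ^ 2) = (\<Sum>i<N. c ^ 2 * z i ^ 2)"
            by (intro sum.cong) (auto simp: z'_def zr_def power_mult_distrib)
          also have "\<dots> = c ^ 2 * s" by (simp add: s_def sum_distrib_left)
          also have "\<dots> = 1" using s0 by (simp add: c_def power_divide)
          finally show ?thesis .
        qed
        have "\<bar>z' i\<bar> \<le> 1" if "i < N" for i
        proof -
          have "z' i ^ 2 \<le> (\<Sum>i<N. z' i ^ 2)" by (rule member_le_sum) (use that in auto)
          then have "z' i ^ 2 \<le> 1 ^ 2" using sq by simp
          then show ?thesis using abs_le_square_iff[of "z' i" 1] by simp
        qed
        then show ?thesis using sq by (auto simp: K_def z'_def zr_def abs_le_iff)
      qed
      then have "\<epsilon> \<le> mp_eval z' f" unfolding \<epsilon>_def by (rule zmin)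
      also have "mp_eval z' f = c ^ (2*e) * mp_eval zr f"
        unfolding z'_def by (rule mp_eval_scale[OF hf])
      also have "c ^ (2*e) = 1 / s ^ e" using s0 by (simp add: c_def power_mult power_divide)
      finally have "\<epsilon> \<le> mp_eval z f / s ^ e" using fz by simp
      then show ?thesis using s0 by (simp add: s_def field_simps)
    qed
  qed
  then show ?thesis using epos by blast
qed


definition L1 :: "mpoly \<Rightarrow> real" where
  "L1 p = (\<Sum>a\<in>Poly_Mapping.keys p. \<bar>Poly_Mapping.lookup p a\<bar>)"

lemma L1_superset: "finite A \<Longrightarrow> Poly_Mapping.keys p \<subseteq> A \<Longrightarrow> L1 p = (\<Sum>a\<in>A. \<bar>Poly_Mapping.lookup p a\<bar>)"
  unfolding L1_def by (rule sum.mono_neutral_left) (auto simp: in_keys_iff)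

lemma L1_nonneg: "L1 p \<ge> 0"
  unfolding L1_def by (rule sum_nonneg) simp

lemma L1_add: "L1 (p + q) \<le> L1 p + L1 q"
proof -
  let ?A = "Poly_Mapping.keys p \<union> Poly_Mapping.keys q"
  have f: "finite ?A" by simp
  have "L1 (p + q) = (\<Sum>a\<in>?A. \<bar>Poly_Mapping.lookup (p + q) a\<bar>)" by (rule L1_superset[OF f keys_add])
  also have "\<dots> \<le> (\<Sum>a\<in>?A. \<bar>Poly_Mapping.lookup p a\<bar> + \<bar>Poly_Mapping.lookup q a\<bar>)"
    by (rule sum_mono) (simp add: lookup_add abs_triangle_ineq)
  also have "\<dots> = L1 p + L1 q"
    by (simp add: sum.distrib L1_superset[OF f, of p] L1_superset[OF f, of q])
  finally show ?thesis .
qed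

lemma L1_uminus: "L1 (- p) = L1 p"
  by (simp add: L1_def keys_uminus_eq)

lemma L1_diff: "L1 (p - q) \<le> L1 p + L1 q"
  using L1_add[of p "- q"] by (simp add: L1_uminus)

lemma lookup_cmul: "Poly_Mapping.lookup (mp_const c * p) a = c * Poly_Mapping.lookup p a"
  unfolding mp_const_def lookup_single_mult by simp

lemma L1_cmul: "L1 (mp_const c * p) = \<bar>c\<bar> * L1 p"
proof -
  have "Poly_Mapping.keys (mp_const c * p) \<subseteq> Poly_Mapping.keys p"
    by (auto simp: in_keys_iff lookup_cmul)
  then have "L1 (mp_const c * p) = (\<Sum>a\<in>Poly_Mapping.keys p. \<bar>Poly_Mapping.lookup (mp_const c * p) a\<bar>)"
    by (intro L1_superset) auto
  then show ?thesis by (simp add: lookup_cmul abs_mult L1_def sum_distrib_left)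
qed

lemma sum_lessThan_add: "(\<Sum>j<a + b. f j) = (\<Sum>j<a. f j) + (\<Sum>i<b. f (a + i) :: 'b::comm_monoid_add)"
  for a b :: nat
  by (induction b) (simp_all add: add.assoc)

lemma sum_split_double: "(\<Sum>i<a. f i + f (a + i)) = (\<Sum>j<2*a. f j :: 'b::comm_monoid_add)"
  for a :: nat
  using sum_lessThan_add[where a=a and b=a and f=f] by (simp add: sum.distrib mult_2)

lemma hp_eqk: "hp k V p \<Longrightarrow> k = k' \<Longrightarrow> hp k' V p" by simp

lemma hp_var_pow: "i \<in> V \<Longrightarrow> hp j V (mp_var i ^ j)"
  using hp_power[OF hp_var, of i V j] by simp

context thmctx begin

lemma hp_fg: "hp (2*(2*d)) {..<n+m+3} (fg \<gamma>)"
proof -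
  let ?V = "{..<n+m+3}"
  have Y: "hp j ?V (mp_var (n+m+2) ^ j)" for j by (rule hp_var_pow) simp
  have Sj: "j \<le> m + 1 \<Longrightarrow> hp e ?V (mp_var (n+j) ^ e)" for j e by (rule hp_var_pow) simp
  have Hp: "hp (2*d) ?V (H p)" by (rule hp_homogenize) (use vars deg_bounds in auto)
  have Hg: "hp (2*d) ?V (H (g i))" if i: "i \<in> {1..m}" for i
    by (rule hp_homogenize) (use vars(2)[OF i] deg_bounds(2)[OF i] in auto)
  have SY: "j \<le> m + 1 \<Longrightarrow> hp (2*d) ?V (mp_var (n+j) ^ 2 * mp_var (n+m+2) ^ (2*d - 2))" for j
    by (rule hp_eqk[OF hp_mult[OF Sj Y]]) (use d1 in auto)
  have t1: "hp (2*d) ?V (mp_const \<gamma> * mp_var (n+m+2) ^ (2*d) - H p - mp_var (n+0) ^ 2 * mp_var (n+m+2) ^ (2*d - 2))"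
    by (intro hp_diff hp_cmul Y Hp SY) simp
  have t2: "hp (2*d) ?V (H (g i) - mp_var (n+i) ^ 2 * mp_var (n+m+2) ^ (2*d - 2))" if "i \<in> {1..m}" for i
    by (intro hp_diff Hg SY) (use that in auto)
  have inner: "hp 2 ?V ((\<Sum>i<n. mp_var i ^ 2) + (\<Sum>j=0..m. mp_var (n+j) ^ 2))"
    by (intro hp_add hp_sum hp_var_pow) auto
  have t3: "hp (2*d) ?V (mp_const (Rt \<gamma> ^ d) * mp_var (n+m+2) ^ (2*d)
      - ((\<Sum>i<n. mp_var i ^ 2) + (\<Sum>j=0..m. mp_var (n+j) ^ 2)) ^ d - mp_var (n + (m+1)) ^ (2*d))"
    by (intro hp_diff hp_cmul Y Sj hp_power[OF inner]) simp
  have sq: "hp (2*d) ?V t \<Longrightarrow> hp (2*(2*d)) ?V (t ^ 2)" for t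
    using hp_power[of "2*d" ?V t 2] by (simp add: mult.commute)
  show ?thesis unfolding f_gamma_def Let_def
    by (intro hp_add sq t1 t3 hp_sum t2) auto
qed


lemma partB:
  assumes gp: "ereal \<gamma> < pstar"
  shows "\<exists>R0. \<forall>r\<ge>R0. fg \<gamma> - mp_const (1 / real r) * (\<Sum>i<n+m+3. mp_var i ^ 2) ^ (2*d) \<in> Pol r (n+m+3) (2*d)"
proof -
  define N' where "N' = n+m+3"
  have N'1: "N' \<ge> 1" by (simp add: N'_def)
  have hf: "hp (2*(2*d)) {..<N'} (fg \<gamma>)" unfolding N'_def by (rule hp_fg)
  obtain \<epsilon> where epos: "\<epsilon> > 0" and fe: "\<And>z. mp_eval z (fg \<gamma>) \<ge> \<epsilon> * (\<Sum>i<N'. z i ^ 2) ^ (2*d)"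
    using hom_min[OF hf _ N'1, of ] pos_def[OF gp] d1 unfolding N'_def by fastforce
  define \<sigma> where "\<sigma> = (\<lambda>i. mp_var i ^ 2 - mp_var (N' + i) ^ 2)"
  define X where "X = (\<Sum>i<N'. mp_var i ^ 2) ^ (2*d)"
  define A where "A = mp_subst \<sigma> (fg \<gamma>)"
  define B where "B = mp_subst \<sigma> X"
  define Cc where "Cc = (\<Sum>i<N'. mp_var i ^ 4 + mp_var (N' + i) ^ 4) ^ (2*d)"
  define C0 where "C0 = L1 A + L1 B + L1 Cc"
  define c where "c = (1 / real (2*N')) ^ (2*d)"
  have cpos: "c > 0" using N'1 by (simp add: c_def)
  define R0 where "R0 = nat \<lceil>max 1 (max (1/\<epsilon>) (2 * real (4*d)^2 * C0 / c))\<rceil>"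
  have "fg \<gamma> - mp_const (1 / real r) * X \<in> Pol r N' (2*d)" if rR: "r \<ge> R0" for r
  proof -
    have r1: "real r \<ge> 1" and re: "real r \<ge> 1/\<epsilon>" and rc: "real r \<ge> 2 * real (4*d)^2 * C0 / c"
      using rR unfolding R0_def by linarith+
    have rpos: "real r > 0" using r1 by simp
    define q where "q = fg \<gamma> - mp_const (1 / real r) * X"
    have hX: "hp (2*(2*d)) {..<N'} X"
      unfolding X_def by (rule hp_eqk[OF hp_power[OF hp_sum[OF hp_var_pow]]]) auto
    have hq: "hp (2*(2*d)) {..<N'} q" unfolding q_def by (intro hp_diff hf hp_cmul hX)
    define G where "G = mp_subst \<sigma> q + mp_const (1 / (2 * real r)) * Cc"
    define T where "T = (\<Sum>i<N'. mp_var i ^ 2 + mp_var (N' + i) ^ 2)"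
    have TT: "T = Tsq (2*N')" unfolding T_def Tsq_def by (rule sum_split_double)
    have hs: "hp 2 {..<2*N'} (\<sigma> i)" if "i \<in> {..<N'}" for i
      unfolding \<sigma>_def using that by (intro hp_diff hp_var_pow) auto
    have hG: "hp (2*(2*(2*d))) {..<2*N'} G"
    proof -
      have "hp (2*(2*(2*d))) {..<2*N'} (mp_subst \<sigma> q)" by (rule hp_subst[OF hq hs])
      moreover have "hp (2*(2*(2*d))) {..<2*N'} Cc"
        unfolding Cc_def by (rule hp_eqk[OF hp_power[OF hp_sum[OF hp_add[OF hp_var_pow hp_var_pow]]]]) auto
      ultimately show ?thesis unfolding G_def by (intro hp_add hp_cmul)
    qed
    have e4: "evk (mp_var i ^ 4)" for i
      using evk_power[OF evk_var2[of i], of 2] by (simp flip: power_mult)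
    have eG: "evk G" unfolding G_def Cc_def \<sigma>_def
      by (intro evk_add evk_subst evk_diff evk_var2 evk_cmul evk_power evk_sum e4)
    interpret pg: polyaG G "2*N'" "2*(2*d)"
      by unfold_locales (use hG eG in \<open>auto simp: hp_def evk_def\<close>)
    define lam where "lam = 1 / (2 * real r) * c"
    have lam: "lam > 0" using rpos cpos by (simp add: lam_def)
    have sph: "mp_eval u G \<ge> lam" if u1: "(\<Sum>i<2*N'. u i ^ 2) = 1" for u
    proof -
      define \<zeta> where "\<zeta> = (\<lambda>i. u i ^ 2 - u (N'+i) ^ 2)"
      have ev: "mp_eval u G = mp_eval \<zeta> q + 1 / (2 * real r) * (\<Sum>i<N'. u i ^ 4 + u (N'+i) ^ 4) ^ (2*d)"
        by (simp add: G_def Cc_def mp_eval_subst \<sigma>_def \<zeta>_def)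
      have q0: "mp_eval \<zeta> q \<ge> 0"
      proof -
        have "mp_eval \<zeta> q = mp_eval \<zeta> (fg \<gamma>) - 1 / real r * (\<Sum>i<N'. \<zeta> i ^ 2) ^ (2*d)"
          by (simp add: q_def X_def)
        moreover have "1 / real r * (\<Sum>i<N'. \<zeta> i ^ 2) ^ (2*d) \<le> \<epsilon> * (\<Sum>i<N'. \<zeta> i ^ 2) ^ (2*d)"
        proof (rule mult_right_mono)
          show "1 / real r \<le> \<epsilon>" using re epos rpos by (simp add: divide_simps mult.commute)
        qed (simp add: sum_nonneg)
        ultimately show ?thesis using fe[of \<zeta>] by linarith
      qed
      have s4: "(\<Sum>i<N'. u i ^ 4 + u (N'+i) ^ 4) \<ge> 1 / real (2*N')"
      proof -
        have "(\<Sum>i<N'. u i ^ 4 + u (N'+i) ^ 4) = (\<Sum>j<2*N'. u j ^ 4)"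
          by (rule sum_split_double)
        moreover have "(\<Sum>j<2*N'. u j ^ 2) ^ 2 \<le> (\<Sum>j<2*N'. (u j ^ 2) ^ 2) * real (card {..<2*N'})"
          by (rule sum_squared_le_sum_of_squares)
        ultimately have "1 \<le> (\<Sum>i<N'. u i ^ 4 + u (N'+i) ^ 4) * real (2*N')"
          using u1 by (simp add: power_mult[symmetric])
        then show ?thesis using N'1 by (simp add: divide_simps)
      qed
      have "c \<le> (\<Sum>i<N'. u i ^ 4 + u (N'+i) ^ 4) ^ (2*d)"
        unfolding c_def by (rule power_mono[OF s4]) simp
      then have "lam \<le> 1 / (2 * real r) * (\<Sum>i<N'. u i ^ 4 + u (N'+i) ^ 4) ^ (2*d)"
        unfolding lam_def using rpos by (intro mult_left_mono) auto
      then show ?thesis using ev q0 by linarith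
    qed
    have LG: "L1 G \<le> C0"
    proof -
      have G': "G = A - mp_const (1 / real r) * B + mp_const (1 / (2 * real r)) * Cc"
        by (simp add: G_def q_def A_def B_def)
      have "L1 G \<le> L1 (A - mp_const (1 / real r) * B) + L1 (mp_const (1 / (2 * real r)) * Cc)"
        unfolding G' by (rule L1_add)
      also have "\<dots> \<le> L1 A + 1 / real r * L1 B + 1 / (2 * real r) * L1 Cc"
        using L1_diff[of A "mp_const (1 / real r) * B"] rpos by (simp add: L1_cmul)
      also have "\<dots> \<le> L1 A + L1 B + L1 Cc"
      proof -
        have "1 / real r * L1 B \<le> 1 * L1 B" using r1 L1_nonneg[of B] by (intro mult_right_mono) auto
        moreover have "1 / (2 * real r) * L1 Cc \<le> 1 * L1 Cc" using r1 L1_nonneg[of Cc] by (intro mult_right_mono) auto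
        ultimately show ?thesis by simp
      qed
      finally show ?thesis by (simp add: C0_def)
    qed
    have cond: "real (2*(2*d)) ^ 2 * (\<Sum>b\<in>Poly_Mapping.keys G. \<bar>Poly_Mapping.lookup G b\<bar>) \<le> real (r^2) * lam"
    proof -
      have e: "real (2*(2*d)) = real (4*d)" by simp
      have "real (2*(2*d)) ^ 2 * L1 G \<le> real (4*d) ^ 2 * C0"
        unfolding e using LG by (intro mult_left_mono) auto
      also have "\<dots> \<le> real r * c / 2" using rc cpos by (simp add: field_simps)
      also have "\<dots> = real (r^2) * lam" using rpos by (simp add: lam_def power2_eq_square field_simps)
      finally show ?thesis by (simp add: L1_def)
    qed
    have r2: "r ^ 2 \<ge> 1" using r1 by (simp add: one_le_power)
    have coeff: "Poly_Mapping.lookup (G * T ^ (r^2)) a \<ge> 0" for a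
      using pg.polya[OF r2 lam sph cond] by (simp add: TT mult.commute)
    have "mp_homogeneous (2*(2*d)) q" by (rule hp_homogeneous[OF hq])
    moreover have "mp_vars q \<subseteq> {..<N'}" by (rule hp_vars[OF hq])
    moreover have "\<forall>a. mp_coeff (G * T ^ (r^2)) a \<ge> 0" using coeff by (simp add: mp_coeff_def)
    ultimately show ?thesis
      unfolding Pol_def Let_def q_def[symmetric] by (simp add: G_def T_def \<sigma>_def Cc_def)
  qed
  then show ?thesis unfolding N'_def X_def by blast
qed
end

theorem theorem4p1:
  fixes n m d :: nat and p :: mpoly and g :: "nat \<Rightarrow> mpoly"
    and R \<beta> :: real and \<eta> :: "nat \<Rightarrow> real"
    and S :: "(nat \<Rightarrow> real) set" and pstar :: ereal
    and l mr :: "nat \<Rightarrow> ereal"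
  assumes vars: "mp_vars p \<subseteq> {..<n}" "\<And>i. i \<in> {1..m} \<Longrightarrow> mp_vars (g i) \<subseteq> {..<n}"
    and d_def: "d = max 1 ((Max (insert (mp_deg p) ((\<lambda>i. mp_deg (g i)) ` {1..m})) + 1) div 2)"
    and S_def: "S = {x. (\<forall>i\<ge>n. x i = 0) \<and> (\<forall>i\<in>{1..m}. mp_eval x (g i) \<ge> 0)}"
    and pstar_def: "pstar = Inf ((\<lambda>x. ereal (mp_eval x p)) ` S)"
    and R_pos: "R > 0"
    and R_bound: "\<And>x. x \<in> S \<Longrightarrow> (\<Sum>i<n. x i ^ 2) \<le> R"
    and eta_bound: "\<And>i x. i \<in> {1..m} \<Longrightarrow> x \<in> S \<Longrightarrow> mp_eval x (g i) \<le> \<eta> i"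
    and beta_bound: "\<And>x. x \<in> S \<Longrightarrow> - mp_eval x p \<le> \<beta>"
    and l_def: "\<And>r. l r = Sup (ereal ` {\<gamma>. f_gamma n m d p g R \<eta> \<beta> \<gamma>
                   - mp_const (1 / real r) * (\<Sum>i<n + m + 3. mp_var i ^ 2) ^ (2*d)
                   \<in> Pol r (n + m + 3) (2*d)})"
    and mr_def: "\<And>r. mr r = Max (l ` {1..r})"
  shows "(\<forall>r\<ge>1. mr r \<le> pstar) \<and> (\<forall>r\<ge>1. mr r \<le> mr (Suc r)) \<and> mr \<longlonglongrightarrow> pstar"
proof -
  interpret thmctx n m d p g R \<beta> \<eta> S pstar
    by (rule thmctx.intro; fact vars d_def S_def pstar_def R_pos R_bound eta_bound beta_bound)
  define \<Gamma> where "\<Gamma> r = {\<gamma>. f_gamma n m d p g R \<eta> \<beta> \<gamma>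
                   - mp_const (1 / real r) * (\<Sum>i<n + m + 3. mp_var i ^ 2) ^ (2*d)
                   \<in> Pol r (n + m + 3) (2*d)}" for r
  have l_eq: "l r = Sup (ereal ` \<Gamma> r)" for r unfolding \<Gamma>_def by (rule l_def)
  have l_le: "l r \<le> pstar" if "r \<ge> 1" for r
    unfolding l_eq by (rule Sup_least) (use partA[OF that] in \<open>auto simp: \<Gamma>_def\<close>)
  have mr_le: "mr r \<le> pstar" if "r \<ge> 1" for r
    unfolding mr_def using that l_le by (subst Max_le_iff) auto
  have mr_mono: "mr r \<le> mr (Suc r)" if "r \<ge> 1" for r
    unfolding mr_def using that by (intro Max_mono) auto
  have l_le_mr: "l r \<le> mr r" if "r \<ge> 1" for r
    unfolding mr_def using that by (intro Max_ge) auto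
  have lim: "mr \<longlonglongrightarrow> pstar"
  proof (rule order_tendstoI)
    fix a assume "a < pstar"
    then obtain \<gamma> where a\<gamma>: "a < ereal \<gamma>" and \<gamma>p: "ereal \<gamma> < pstar" using ereal_dense2 by blast
    obtain R0 where R0: "\<And>r. r \<ge> R0 \<Longrightarrow> \<gamma> \<in> \<Gamma> r"
      using partB[OF \<gamma>p] unfolding \<Gamma>_def by blast
    show "\<forall>\<^sub>F r in sequentially. a < mr r"
    proof (rule eventually_sequentiallyI[of "max R0 1"])
      fix r assume r: "max R0 1 \<le> r"
      have "ereal \<gamma> \<le> l r" unfolding l_eq using R0[of r] r by (intro Sup_upper) auto
      also have "\<dots> \<le> mr r" using l_le_mr[of r] r by simp
      finally show "a < mr r" using a\<gamma> by simp
    qed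
  next
    fix a assume "pstar < a"
    show "\<forall>\<^sub>F r in sequentially. mr r < a"
      by (rule eventually_sequentiallyI[of 1]) (use mr_le \<open>pstar < a\<close> in \<open>force\<close>)
  qed
  show ?thesis using mr_le mr_mono lim by blast
qed

end
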